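(* Let $m\ge 1$, $k\in\{2,3,4\}$ and $n\ge k-1$. There exists $P\in U_{m,k}$ with two properties. First, its homogeneous component $\varphi_{m,k}(P)$ of degree $mn+(m+1)(k-1)-1$ lies in $W_{m,k}$. Second, when $\varphi_{m,k}(P)$ is written in the basis of $W_{m,k}$ given below, the coefficient of the basis element $$(x_1\cdots x_n)^m\big(x_1^{(m+1)(k-1)-1}+\cdots+x_n^{(m+1)(k-1)-1}\big)$$ is nonzero.
   Context: $mB^n=\{0,1,\ldots,m\}^n$. A polynomial has a zero of multiplicity at least $k$ at $\mathbf a$ if all its partial derivatives of order less than $k$ vanish at $\mathbf a$. For an integer $k\ge 2$, a polynomial $P\in\mathbb{R}[x_1,\ldots,x_n]$ is called $(m,k)$-reduced if two conditions hold: $\deg P\le mn+(m+1)(k-1)-1$, and no monomial of $P$ is divisible by $x_{i_1}^{m+1}\cdots x_{i_k}^{m+1}$ for any indices $i_1,\ldots,i_k$ (not necessarily distinct). $U_{m,k}$ is the space of $(m,k)$-reduced polynomials with a zero of multiplicity at least $k$ at every point of $mB^n\setminus\{\mathbf 0\}$. $\varphi_{m,k}(P)$ is the homogeneous component of $P$ of degree $mn+(m+1)(k-1)-1$. $W_{m,k}$ is the real span of the polynomials $(x_1\cdots x_n)^m(x_1^{l_1}\cdots x_n^{l_n})^{m+1}(x_1^d+\cdots+x_n^d)$ with $d,l_1,\ldots,l_n$ nonnegative integers and $d+(m+1)(l_1+\cdots+l_n)=(m+1)(k-1)-1$. For $n\ge k-1$ these polynomials form a basis of $W_{m,k}$. 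*)

theory Defs
  imports Complex_Main
begin

text \<open>Real polynomials in the variables x_0, ..., x_(n-1) are represented by their
coefficient functions: a monomial is an exponent vector (nat => nat), and a polynomial
is a map from exponent vectors to real coefficients.\<close>

type_synonym mono = "nat \<Rightarrow> nat"
type_synonym mpoly = "mono \<Rightarrow> real"

definition is_mono :: "nat \<Rightarrow> mono \<Rightarrow> bool" where
  "is_mono n \<alpha> \<longleftrightarrow> (\<forall>i\<ge>n. \<alpha> i = 0)"

definition is_poly :: "nat \<Rightarrow> mpoly \<Rightarrow> bool" where
  "is_poly n P \<longleftrightarrow> finite {\<alpha>. P \<alpha> \<noteq> 0} \<and> (\<forall>\<alpha>. P \<alpha> \<noteq> 0 \<longrightarrow> is_mono n \<alpha>)"

definition mdeg :: "nat \<Rightarrow> mono \<Rightarrow> nat" where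
  "mdeg n \<alpha> = (\<Sum>i<n. \<alpha> i)"

definition pderiv_at :: "nat \<Rightarrow> mpoly \<Rightarrow> mono \<Rightarrow> (nat \<Rightarrow> real) \<Rightarrow> real" where
  "pderiv_at n P \<alpha> a = (\<Sum>\<beta>\<in>{\<beta>. P \<beta> \<noteq> 0}. P \<beta> *
      (\<Prod>i<n. of_nat (\<beta> i choose \<alpha> i) * fact (\<alpha> i) * a i ^ (\<beta> i - \<alpha> i)))"

definition zero_mult_ge :: "nat \<Rightarrow> mpoly \<Rightarrow> nat \<Rightarrow> (nat \<Rightarrow> real) \<Rightarrow> bool" where
  "zero_mult_ge n P k a \<longleftrightarrow> (\<forall>\<alpha>. is_mono n \<alpha> \<longrightarrow> mdeg n \<alpha> < k \<longrightarrow> pderiv_at n P \<alpha> a = 0)"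

text \<open>x_{j 0}^(m+1) ... x_{j (k-1)}^(m+1) divides x^alpha, indices j t < n not necessarily distinct.\<close>
definition divisible_by_k_powers :: "nat \<Rightarrow> nat \<Rightarrow> nat \<Rightarrow> mono \<Rightarrow> bool" where
  "divisible_by_k_powers n m k \<alpha> \<longleftrightarrow>
     (\<exists>j::nat \<Rightarrow> nat. (\<forall>t<k. j t < n) \<and>
        (\<forall>i<n. (m + 1) * card {t. t < k \<and> j t = i} \<le> \<alpha> i))"

definition reduced :: "nat \<Rightarrow> nat \<Rightarrow> nat \<Rightarrow> mpoly \<Rightarrow> bool" where
  "reduced n m k P \<longleftrightarrow> is_poly n P \<and>
     (\<forall>\<alpha>. P \<alpha> \<noteq> 0 \<longrightarrow> mdeg n \<alpha> \<le> m * n + (m + 1) * (k - 1) - 1) \<and>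
     (\<forall>\<alpha>. P \<alpha> \<noteq> 0 \<longrightarrow> \<not> divisible_by_k_powers n m k \<alpha>)"

definition U :: "nat \<Rightarrow> nat \<Rightarrow> nat \<Rightarrow> mpoly set" where
  "U n m k = {P. reduced n m k P \<and>
     (\<forall>a::nat \<Rightarrow> nat. (\<forall>i<n. a i \<le> m) \<and> (\<exists>i<n. a i \<noteq> 0) \<longrightarrow>
        zero_mult_ge n P k (\<lambda>i. real (a i)))}"

definition phi :: "nat \<Rightarrow> nat \<Rightarrow> nat \<Rightarrow> mpoly \<Rightarrow> mpoly" where
  "phi n m k P = (\<lambda>\<alpha>. if mdeg n \<alpha> = m * n + (m + 1) * (k - 1) - 1 then P \<alpha> else 0)"

text \<open>The polynomial (x_0...x_(n-1))^m (x^l)^(m+1) (x_0^d + ... + x_(n-1)^d).\<close>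
definition wpoly :: "nat \<Rightarrow> nat \<Rightarrow> nat \<Rightarrow> mono \<Rightarrow> mpoly" where
  "wpoly n m d l = (\<lambda>\<beta>. \<Sum>i<n. if \<beta> = (\<lambda>j. if j < n then m + (m + 1) * l j + (if j = i then d else 0) else 0)
                               then 1 else 0)"

text \<open>Index set of the spanning family of W_{m,k}.\<close>
definition W_index :: "nat \<Rightarrow> nat \<Rightarrow> nat \<Rightarrow> (nat \<times> mono) set" where
  "W_index n m k = {(d, l). is_mono n l \<and> d + (m + 1) * (\<Sum>i<n. l i) = (m + 1) * (k - 1) - 1}"

end

theory Submission
  imports Defs "HOL-Computational_Algebra.Polynomial" "HOL-Library.FuncSet"
begin

definition Dv :: "real poly \<Rightarrow> nat \<Rightarrow> real \<Rightarrow> real" where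
  "Dv f s x = poly ((pderiv ^^ s) f) x"

lemma pochhammer_Suc_choose:
  "pochhammer (1 + real j) s = (of_nat ((j + s) choose s) * fact s :: real)"
proof -
  have "(of_nat (j + s) gchoose s :: real) = pochhammer (of_nat (j+s) - of_nat s + 1) s / fact s"
    by (rule gbinomial_pochhammer')
  moreover have "(of_nat (j+s) - of_nat s + 1 :: real) = 1 + real j" by simp
  ultimately show ?thesis by (simp add: binomial_gbinomial field_simps)
qed

lemma poly_sum_le:
  assumes "degree g \<le> N"
  shows "poly g (x::real) = (\<Sum>j\<le>N. coeff g j * x ^ j)"
proof -
  have "poly g x = (\<Sum>j\<le>degree g. coeff g j * x ^ j)" by (simp add: poly_altdef)
  also have "\<dots> = (\<Sum>j\<le>N. coeff g j * x ^ j)"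
    by (rule sum.mono_neutral_left) (use assms in \<open>auto simp: coeff_eq_0\<close>)
  finally show ?thesis .
qed

lemma Dv_sum:
  assumes "degree f \<le> N"
  shows "Dv f s x = (\<Sum>b\<le>N. coeff f b * (of_nat (b choose s) * fact s * x ^ (b - s)))"
proof -
  have dg: "degree ((pderiv ^^ s) f) \<le> N" using assms by (simp add: degree_higher_pderiv)
  have "Dv f s x = (\<Sum>j\<le>N. coeff ((pderiv ^^ s) f) j * x ^ j)"
    unfolding Dv_def by (rule poly_sum_le[OF dg])
  also have "\<dots> = (\<Sum>j\<le>N. coeff f (j + s) * (of_nat ((j + s) choose s) * fact s * x ^ j))"
    using pochhammer_Suc_choose by (simp add: coeff_higher_pderiv mult_ac)
  also have "\<dots> = (\<Sum>b\<in>{s..N+s}. coeff f b * (of_nat (b choose s) * fact s * x ^ (b - s)))"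
  proof -
    have "(\<Sum>b\<in>{0+s..N+s}. coeff f b * (of_nat (b choose s) * fact s * x ^ (b - s)))
        = (\<Sum>j\<in>{0..N}. coeff f (j + s) * (of_nat ((j + s) choose s) * fact s * x ^ (j + s - s)))"
      by (rule sum.shift_bounds_cl_nat_ivl)
    then show ?thesis by (simp add: atLeast0AtMost)
  qed
  also have "\<dots> = (\<Sum>b\<le>N+s. coeff f b * (of_nat (b choose s) * fact s * x ^ (b - s)))"
    by (rule sum.mono_neutral_left) auto
  also have "\<dots> = (\<Sum>b\<le>N. coeff f b * (of_nat (b choose s) * fact s * x ^ (b - s)))"
    by (rule sum.mono_neutral_right) (use assms in \<open>auto simp: coeff_eq_0\<close>)
  finally show ?thesis .
qed

lemma pderiv_sum': "pderiv (sum f A) = (\<Sum>x\<in>A. pderiv (f x))"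
  by (induction A rule: infinite_finite_induct) (simp_all add: pderiv_add)

lemma higher_pderiv_mult:
  fixes f g :: "real poly"
  shows "(pderiv ^^ s) (f * g) =
    (\<Sum>j\<le>s. smult (of_nat (s choose j)) ((pderiv ^^ j) f * (pderiv ^^ (s - j)) g))"
proof (induction s)
  case 0
  then show ?case by simp
next
  case (Suc s)
  define X where "X j = (pderiv ^^ j) f * (pderiv ^^ (Suc s - j)) g" for j
  have "(pderiv ^^ Suc s) (f * g) = pderiv ((pderiv ^^ s) (f * g))" by simp
  also have "\<dots> = (\<Sum>j\<le>s. smult (of_nat (s choose j)) (pderiv ((pderiv ^^ j) f * (pderiv ^^ (s - j)) g)))"
    by (simp add: Suc pderiv_sum' pderiv_smult)
  also have "\<dots> = (\<Sum>j\<le>s. smult (of_nat (s choose j)) (X j + X (Suc j)))"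
  proof (rule sum.cong[OF refl])
    fix j assume "j \<in> {..s}"
    then have j: "j \<le> s" by simp
    have "pderiv ((pderiv ^^ j) f * (pderiv ^^ (s - j)) g) =
        (pderiv ^^ j) f * (pderiv ^^ Suc (s - j)) g + (pderiv ^^ (s - j)) g * (pderiv ^^ Suc j) f"
      by (simp add: pderiv_mult)
    also have "\<dots> = X j + X (Suc j)" using j by (simp add: X_def Suc_diff_le mult.commute)
    finally show "smult (of_nat (s choose j)) (pderiv ((pderiv ^^ j) f * (pderiv ^^ (s - j)) g))
        = smult (of_nat (s choose j)) (X j + X (Suc j))" by simp
  qed
  also have "\<dots> = (\<Sum>j\<le>s. smult (of_nat (s choose j)) (X j)) + (\<Sum>j\<le>s. smult (of_nat (s choose j)) (X (Suc j)))"
    by (simp add: smult_add_right sum.distrib)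
  also have "(\<Sum>j\<le>s. smult (of_nat (s choose j)) (X j)) = X 0 + (\<Sum>j\<le>s. smult (of_nat (s choose Suc j)) (X (Suc j)))"
  proof -
    have "(\<Sum>j\<le>Suc s. smult (of_nat (s choose j)) (X j)) = (\<Sum>j\<le>s. smult (of_nat (s choose j)) (X j))"
      by simp
    moreover have "(\<Sum>j\<le>Suc s. smult (of_nat (s choose j)) (X j)) = X 0 + (\<Sum>j\<le>s. smult (of_nat (s choose Suc j)) (X (Suc j)))"
      by (subst sum.atMost_Suc_shift) simp
    ultimately show ?thesis by (simp add: binomial_eq_0)
  qed
  also have "X 0 + (\<Sum>j\<le>s. smult (of_nat (s choose Suc j)) (X (Suc j))) + (\<Sum>j\<le>s. smult (of_nat (s choose j)) (X (Suc j)))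
      = (\<Sum>j\<le>Suc s. smult (of_nat (Suc s choose j)) (X j))"
    by (subst sum.atMost_Suc_shift) (simp add: sum.distrib smult_add_left add_ac)
  finally show ?case by (simp add: X_def)
qed

lemma Dv_mult:
  "Dv (f * g) s x = (\<Sum>j\<le>s. of_nat (s choose j) * Dv f j x * Dv g (s - j) x)"
  unfolding Dv_def higher_pderiv_mult by (simp add: poly_sum mult_ac)

lemma Dv_1: "Dv 1 s x = (if s = 0 then 1 else 0)"
proof (cases s)
  case 0 then show ?thesis by (simp add: Dv_def)
next
  case (Suc s') then show ?thesis
    by (simp add: Dv_def funpow_Suc_right del: funpow.simps)
qed

lemma Dv_0 [simp]: "Dv f 0 x = poly f x" by (simp add: Dv_def)

lemma Dv_add: "Dv (f + g) s x = Dv f s x + Dv g s x"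
  by (simp add: Dv_def higher_pderiv_add)

lemma Dv_smult: "Dv (smult c f) s x = c * Dv f s x"
  by (simp add: Dv_def higher_pderiv_smult)

lemma pderiv_dvd_lin_power:
  fixes f :: "real poly"
  assumes "[:-t, 1:] ^ Suc k dvd f"
  shows "[:-t, 1:] ^ k dvd pderiv f"
proof -
  obtain q where q: "f = [:-t, 1:] ^ Suc k * q" using assms by (auto elim: dvdE)
  have "pderiv f = [:-t, 1:] ^ k * ([:-t, 1:] * pderiv q + smult (of_nat (Suc k)) q)"
    unfolding q pderiv_mult pderiv_power_Suc by (simp add: pderiv_pCons algebra_simps)
  then show ?thesis by simp
qed

lemma higher_pderiv_dvd_lin_power:
  fixes f :: "real poly"
  assumes "[:-t, 1:] ^ k dvd f" "s \<le> k"
  shows "[:-t, 1:] ^ (k - s) dvd (pderiv ^^ s) f"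
  using assms
proof (induction s)
  case 0 then show ?case by simp
next
  case (Suc s)
  then have "[:-t, 1:] ^ Suc (k - Suc s) dvd (pderiv ^^ s) f"
    by (metis Suc_diff_Suc Suc_le_lessD less_imp_le_nat)
  then show ?case by (simp add: pderiv_dvd_lin_power)
qed

lemma Dv_root:
  fixes f :: "real poly"
  assumes "[:-t, 1:] ^ k dvd f" "s < k"
  shows "Dv f s t = 0"
proof -
  have "[:-t, 1:] ^ (k - s) dvd (pderiv ^^ s) f"
    using assms by (intro higher_pderiv_dvd_lin_power) auto
  then obtain q where "(pderiv ^^ s) f = [:-t, 1:] ^ (k - s) * q" by (auto elim: dvdE)
  moreover have "k - s > 0" using assms by simp
  ultimately show ?thesis by (simp add: Dv_def)
qed

definition sep :: "nat \<Rightarrow> (nat \<Rightarrow> real poly) \<Rightarrow> mpoly" where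
  "sep n f = (\<lambda>\<beta>. if is_mono n \<beta> then (\<Prod>i<n. coeff (f i) (\<beta> i)) else 0)"

definition box :: "nat \<Rightarrow> (nat \<Rightarrow> nat) \<Rightarrow> mono set" where
  "box n N = {\<beta>. (\<forall>i<n. \<beta> i \<le> N i) \<and> (\<forall>i\<ge>n. \<beta> i = 0)}"

definition Dsep :: "nat \<Rightarrow> (nat \<Rightarrow> real poly) \<Rightarrow> mono \<Rightarrow> (nat \<Rightarrow> real) \<Rightarrow> real" where
  "Dsep n f \<beta> a = (\<Prod>i<n. Dv (f i) (\<beta> i) (a i))"

definition Kf :: "nat \<Rightarrow> mono \<Rightarrow> mono \<Rightarrow> (nat \<Rightarrow> real) \<Rightarrow> real" where
  "Kf n \<beta> \<alpha> a = (\<Prod>i<n. of_nat (\<beta> i choose \<alpha> i) * fact (\<alpha> i) * a i ^ (\<beta> i - \<alpha> i))"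

lemma finite_box: "finite (box n N)"
proof -
  let ?M = "\<Sum>i<n. N i"
  have "box n N \<subseteq> {f. \<forall>x. (x \<in> {..<n} \<longrightarrow> f x \<in> {0..?M}) \<and> (x \<notin> {..<n} \<longrightarrow> f x = 0)}"
  proof
    fix \<beta> assume b: "\<beta> \<in> box n N"
    have "\<beta> x \<le> ?M" if "x < n" for x
    proof -
      have "\<beta> x \<le> N x" using b that by (auto simp: box_def)
      also have "N x \<le> ?M" using that by (intro member_le_sum) auto
      finally show ?thesis .
    qed
    then show "\<beta> \<in> {f. \<forall>x. (x \<in> {..<n} \<longrightarrow> f x \<in> {0..?M}) \<and> (x \<notin> {..<n} \<longrightarrow> f x = 0)}"
      using b by (auto simp: box_def)
  qed
  moreover have "finite {f. \<forall>x. (x \<in> {..<n} \<longrightarrow> f x \<in> {0..?M}) \<and> (x \<notin> {..<n} \<longrightarrow> (f x::nat) = 0)}"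
    by (rule finite_set_of_finite_funs) auto
  ultimately show ?thesis by (rule finite_subset)
qed

lemma sep_support: "sep n f \<beta> \<noteq> 0 \<Longrightarrow> \<beta> \<in> box n (\<lambda>i. degree (f i))"
  unfolding sep_def box_def is_mono_def
  by (auto split: if_splits intro: le_degree)

lemma sep_support_finite: "finite {\<beta>. sep n f \<beta> \<noteq> 0}"
  by (rule finite_subset[OF _ finite_box]) (auto dest: sep_support)

lemma pderiv_at_superset:
  assumes "finite S" "{\<beta>. P \<beta> \<noteq> 0} \<subseteq> S"
  shows "pderiv_at n P \<alpha> a = (\<Sum>\<beta>\<in>S. P \<beta> * Kf n \<beta> \<alpha> a)"
  unfolding pderiv_at_def Kf_def
  by (rule sum.mono_neutral_left) (use assms in auto)

lemma prod_sum_box: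
  fixes F :: "nat \<Rightarrow> nat \<Rightarrow> real"
  shows "(\<Prod>i<n. \<Sum>b\<le>N i. F i b) = (\<Sum>\<beta>\<in>box n N. \<Prod>i<n. F i (\<beta> i))"
proof -
  have "(\<Prod>i<n. \<Sum>b\<le>N i. F i b) = (\<Sum>g\<in>PiE {..<n} (\<lambda>i. {..N i}). \<Prod>i<n. F i (g i))"
    by (rule prod_sum_PiE) auto
  also have "\<dots> = (\<Sum>\<beta>\<in>box n N. \<Prod>i<n. F i (\<beta> i))"
  proof (rule sum.reindex_bij_witness[where i = "\<lambda>\<beta>. restrict \<beta> {..<n}"
        and j = "\<lambda>g i. if i < n then g i else 0"])
    fix g assume "g \<in> PiE {..<n} (\<lambda>i. {..N i})"
    then show "restrict (\<lambda>i. if i < n then g i else 0) {..<n} = g"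
      by (auto simp: PiE_def extensional_def fun_eq_iff)
  next
    fix g assume "g \<in> PiE {..<n} (\<lambda>i. {..N i})"
    then show "(\<lambda>i. if i < n then g i else 0) \<in> box n N"
      by (auto simp: box_def PiE_def)
  next
    fix \<beta> assume "\<beta> \<in> box n N"
    then show "(\<lambda>i. if i < n then restrict \<beta> {..<n} i else 0) = \<beta>"
      by (auto simp: box_def fun_eq_iff)
  next
    fix \<beta> assume "\<beta> \<in> box n N"
    then show "restrict \<beta> {..<n} \<in> PiE {..<n} (\<lambda>i. {..N i})"
      by (auto simp: box_def)
  next
    fix g assume "g \<in> PiE {..<n} (\<lambda>i. {..N i})"
    then show "(\<Prod>i<n. F i (if i < n then g i else 0)) = (\<Prod>i<n. F i (g i))"
      by (intro prod.cong) auto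
  qed
  finally show ?thesis .
qed

lemma pderiv_at_sep: "pderiv_at n (sep n f) \<alpha> a = Dsep n f \<alpha> a"
proof -
  let ?N = "\<lambda>i. degree (f i)"
  have "pderiv_at n (sep n f) \<alpha> a = (\<Sum>\<beta>\<in>box n ?N. sep n f \<beta> * Kf n \<beta> \<alpha> a)"
    by (rule pderiv_at_superset[OF finite_box]) (auto dest: sep_support)
  also have "\<dots> = (\<Sum>\<beta>\<in>box n ?N. \<Prod>i<n. coeff (f i) (\<beta> i) *
      (of_nat (\<beta> i choose \<alpha> i) * fact (\<alpha> i) * a i ^ (\<beta> i - \<alpha> i)))"
    by (intro sum.cong refl) (auto simp: sep_def Kf_def box_def is_mono_def prod.distrib)
  also have "\<dots> = (\<Prod>i<n. \<Sum>b\<le>?N i. coeff (f i) b *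
      (of_nat (b choose \<alpha> i) * fact (\<alpha> i) * a i ^ (b - \<alpha> i)))"
    by (rule prod_sum_box[symmetric])
  also have "\<dots> = Dsep n f \<alpha> a"
    unfolding Dsep_def by (intro prod.cong refl Dv_sum[symmetric]) simp
  finally show ?thesis .
qed

lemma pderiv_at_sum:
  assumes "finite I" "\<And>t. t \<in> I \<Longrightarrow> finite {\<beta>. P t \<beta> \<noteq> 0}"
  shows "pderiv_at n (\<lambda>\<beta>. \<Sum>t\<in>I. P t \<beta>) \<alpha> a = (\<Sum>t\<in>I. pderiv_at n (P t) \<alpha> a)"
proof -
  let ?S = "\<Union>t\<in>I. {\<beta>. P t \<beta> \<noteq> 0}"
  have fS: "finite ?S" using assms by auto
  have "pderiv_at n (\<lambda>\<beta>. \<Sum>t\<in>I. P t \<beta>) \<alpha> a = (\<Sum>\<beta>\<in>?S. (\<Sum>t\<in>I. P t \<beta>) * Kf n \<beta> \<alpha> a)"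
  proof (rule pderiv_at_superset[OF fS])
    show "{\<beta>. (\<Sum>t\<in>I. P t \<beta>) \<noteq> 0} \<subseteq> ?S"
    proof
      fix \<beta> assume "\<beta> \<in> {\<beta>. (\<Sum>t\<in>I. P t \<beta>) \<noteq> 0}"
      then obtain t where "t \<in> I" "P t \<beta> \<noteq> 0" by (auto elim: sum.not_neutral_contains_not_neutral)
      then show "\<beta> \<in> ?S" by auto
    qed
  qed
  also have "\<dots> = (\<Sum>t\<in>I. \<Sum>\<beta>\<in>?S. P t \<beta> * Kf n \<beta> \<alpha> a)"
    by (simp add: sum_distrib_right sum.swap[of _ ?S])
  also have "\<dots> = (\<Sum>t\<in>I. pderiv_at n (P t) \<alpha> a)"
    by (intro sum.cong refl pderiv_at_superset[symmetric] fS) auto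
  finally show ?thesis .
qed

lemma pderiv_at_add:
  assumes "finite {\<beta>. P \<beta> \<noteq> 0}" "finite {\<beta>. Q \<beta> \<noteq> 0}"
  shows "pderiv_at n (\<lambda>\<beta>. P \<beta> + Q \<beta>) \<alpha> a = pderiv_at n P \<alpha> a + pderiv_at n Q \<alpha> a"
  using pderiv_at_sum[where I="{True, False}" and P="\<lambda>t. if t then P else Q" and n=n and \<alpha>=\<alpha> and a=a] assms
  by (simp add: if_distrib cong: if_cong)

lemma pderiv_at_cmult:
  assumes "finite {\<beta>. P \<beta> \<noteq> 0}"
  shows "pderiv_at n (\<lambda>\<beta>. c * P \<beta>) \<alpha> a = c * pderiv_at n P \<alpha> a"
proof -
  have "pderiv_at n (\<lambda>\<beta>. c * P \<beta>) \<alpha> a = (\<Sum>\<beta>\<in>{\<beta>. P \<beta> \<noteq> 0}. c * P \<beta> * Kf n \<beta> \<alpha> a)"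
    by (rule pderiv_at_superset[OF assms]) auto
  also have "\<dots> = c * pderiv_at n P \<alpha> a"
    by (subst pderiv_at_superset[OF assms, where P=P]) (auto simp: sum_distrib_left mult_ac)
  finally show ?thesis .
qed

lemma Dsep_mult:
  "Dsep n (\<lambda>i. f i * g i) \<alpha> a =
    (\<Sum>\<gamma>\<in>box n \<alpha>. (\<Prod>i<n. of_nat (\<alpha> i choose \<gamma> i) * Dv (f i) (\<gamma> i) (a i)) *
        Dsep n g (\<lambda>i. \<alpha> i - \<gamma> i) a)"
proof -
  have "Dsep n (\<lambda>i. f i * g i) \<alpha> a =
     (\<Prod>i<n. \<Sum>j\<le>\<alpha> i. of_nat (\<alpha> i choose j) * Dv (f i) j (a i) * Dv (g i) (\<alpha> i - j) (a i))"
    unfolding Dsep_def by (simp add: Dv_mult)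
  also have "\<dots> = (\<Sum>\<gamma>\<in>box n \<alpha>. \<Prod>i<n. of_nat (\<alpha> i choose \<gamma> i) * Dv (f i) (\<gamma> i) (a i) * Dv (g i) (\<alpha> i - \<gamma> i) (a i))"
    by (rule prod_sum_box)
  also have "\<dots> = (\<Sum>\<gamma>\<in>box n \<alpha>. (\<Prod>i<n. of_nat (\<alpha> i choose \<gamma> i) * Dv (f i) (\<gamma> i) (a i)) *
        Dsep n g (\<lambda>i. \<alpha> i - \<gamma> i) a)"
    unfolding Dsep_def by (simp add: prod.distrib)
  finally show ?thesis .
qed

definition fs :: "mpoly \<Rightarrow> bool" where "fs P \<longleftrightarrow> finite {\<beta>. P \<beta> \<noteq> 0}"

lemma fs_sep[simp]: "fs (sep n f)"
  by (simp add: fs_def sep_support_finite)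

lemma fs_sum[simp]: "(\<And>t. t \<in> I \<Longrightarrow> fs (P t)) \<Longrightarrow> fs (\<lambda>\<beta>. \<Sum>t\<in>I. P t \<beta>)"
proof -
  assume a: "\<And>t. t \<in> I \<Longrightarrow> fs (P t)"
  show ?thesis
  proof (cases "finite I")
    case True
    have "{\<beta>. (\<Sum>t\<in>I. P t \<beta>) \<noteq> 0} \<subseteq> (\<Union>t\<in>I. {\<beta>. P t \<beta> \<noteq> 0})"
      by (auto elim: sum.not_neutral_contains_not_neutral)
    then show ?thesis unfolding fs_def by (rule finite_subset) (use a True in \<open>auto simp: fs_def\<close>)
  next
    case False then show ?thesis by (simp add: fs_def)
  qed
qed

lemma fs_if[simp]: "fs P \<Longrightarrow> fs (\<lambda>\<beta>. if b then P \<beta> else 0)"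
  by (cases b) (simp_all add: fs_def)

lemma fs_cmult[simp]: "fs P \<Longrightarrow> fs (\<lambda>\<beta>. c * P \<beta>)"
  unfolding fs_def by (rule finite_subset[of _ "{\<beta>. P \<beta> \<noteq> 0}"]) auto

lemma fs_add[simp]: "fs P \<Longrightarrow> fs Q \<Longrightarrow> fs (\<lambda>\<beta>. P \<beta> + Q \<beta>)"
  unfolding fs_def by (rule finite_subset[of _ "{\<beta>. P \<beta> \<noteq> 0} \<union> {\<beta>. Q \<beta> \<noteq> 0}"]) auto

lemma pderiv_at_sum'[simp]:
  "finite I \<Longrightarrow> (\<And>t. t \<in> I \<Longrightarrow> fs (P t)) \<Longrightarrow>
   pderiv_at n (\<lambda>\<beta>. \<Sum>t\<in>I. P t \<beta>) \<alpha> a = (\<Sum>t\<in>I. pderiv_at n (P t) \<alpha> a)"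
  by (rule pderiv_at_sum) (auto simp: fs_def)

lemma pderiv_at_zero: "pderiv_at n (\<lambda>\<beta>. 0) \<alpha> a = 0"
  by (simp add: pderiv_at_def)

lemma pderiv_at_if[simp]:
  "pderiv_at n (\<lambda>\<beta>. if b then P \<beta> else 0) \<alpha> a = (if b then pderiv_at n P \<alpha> a else 0)"
  by (cases b) (simp_all add: pderiv_at_zero)

lemma pderiv_at_add'[simp]:
  "fs P \<Longrightarrow> fs Q \<Longrightarrow> pderiv_at n (\<lambda>\<beta>. P \<beta> + Q \<beta>) \<alpha> a = pderiv_at n P \<alpha> a + pderiv_at n Q \<alpha> a"
  by (rule pderiv_at_add) (auto simp: fs_def)

lemma pderiv_at_cmult'[simp]:
  "fs P \<Longrightarrow> pderiv_at n (\<lambda>\<beta>. c * P \<beta>) \<alpha> a = c * pderiv_at n P \<alpha> a"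
  by (rule pderiv_at_cmult) (auto simp: fs_def)

definition qA :: "real poly \<Rightarrow> nat \<Rightarrow> nat \<Rightarrow> real poly" where
  "qA f i l = (if l = i then f else 1)"

definition PA where "PA n w f = (\<lambda>\<beta>. \<Sum>i<n. sep n (\<lambda>l. w * qA f i l) \<beta>)"
definition PB where "PB n w f g = (\<lambda>\<beta>. \<Sum>i<n. \<Sum>j<n. if i \<noteq> j then
   sep n (\<lambda>l. w * (qA f i l * qA g j l)) \<beta> else 0)"
definition PC where "PC n w g = (\<lambda>\<beta>. \<Sum>i<n. \<Sum>j<n. \<Sum>x<n. if i \<noteq> j \<and> i \<noteq> x \<and> j \<noteq> x then
   sep n (\<lambda>l. w * (qA g i l * qA g j l * qA g x l)) \<beta> else 0)"
definition PD where "PD n w = sep n (\<lambda>l. w * 1)"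

definition Pk where "Pk n w f p g c C0 = (\<lambda>\<beta>. PA n w f \<beta> + PB n w p g \<beta> + c * PC n w g \<beta> + C0 * PD n w \<beta>)"

definition GA where "GA n f \<beta> a = (\<Sum>i<n. Dsep n (qA f i) \<beta> a)"
definition GB where "GB n f g \<beta> a = (\<Sum>i<n. \<Sum>j<n. if i \<noteq> j then Dsep n (\<lambda>l. qA f i l * qA g j l) \<beta> a else 0)"
definition GC where "GC n g \<beta> a = (\<Sum>i<n. \<Sum>j<n. \<Sum>x<n. if i \<noteq> j \<and> i \<noteq> x \<and> j \<noteq> x then
   Dsep n (\<lambda>l. qA g i l * qA g j l * qA g x l) \<beta> a else 0)"
definition GD where "GD n \<beta> a = Dsep n (\<lambda>l. 1) \<beta> a"
definition Gk where "Gk n f p g c C0 \<beta> a = GA n f \<beta> a + GB n p g \<beta> a + c * GC n g \<beta> a + C0 * GD n \<beta> a"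

definition coefH where "coefH n w \<alpha> \<gamma> a = (\<Prod>i<n. of_nat (\<alpha> i choose \<gamma> i) * Dv w (\<gamma> i) (a i))"

lemma pderiv_at_Pw:
  "pderiv_at n (sep n (\<lambda>l. w * q l)) \<alpha> a = (\<Sum>\<gamma>\<in>box n \<alpha>. coefH n w \<alpha> \<gamma> a * Dsep n q (\<lambda>i. \<alpha> i - \<gamma> i) a)"
  unfolding pderiv_at_sep Dsep_mult coefH_def ..

lemma swap_lemma:
  "(\<Sum>i\<in>I. \<Sum>\<gamma>\<in>B. h \<gamma> * X i \<gamma>) = (\<Sum>\<gamma>\<in>B. (h \<gamma>::real) * (\<Sum>i\<in>I. X i \<gamma>))"
  unfolding sum_distrib_left by (rule sum.swap)

lemma pderiv_at_Pk:
  "pderiv_at n (Pk n w f p g c C0) \<alpha> a =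
    (\<Sum>\<gamma>\<in>box n \<alpha>. coefH n w \<alpha> \<gamma> a * Gk n f p g c C0 (\<lambda>i. \<alpha> i - \<gamma> i) a)"
proof -
  let ?B = "box n \<alpha>" and ?h = "\<lambda>\<gamma>. coefH n w \<alpha> \<gamma> a" and ?d = "\<lambda>\<gamma> i. \<alpha> i - \<gamma> i"
  have A: "pderiv_at n (PA n w f) \<alpha> a = (\<Sum>\<gamma>\<in>?B. ?h \<gamma> * GA n f (?d \<gamma>) a)"
    unfolding PA_def GA_def by (simp add: pderiv_at_Pw swap_lemma)
  have B: "pderiv_at n (PB n w p g) \<alpha> a = (\<Sum>\<gamma>\<in>?B. ?h \<gamma> * GB n p g (?d \<gamma>) a)"
  proof -
    have "pderiv_at n (PB n w p g) \<alpha> a = (\<Sum>i<n. \<Sum>j<n. if i \<noteq> j then \<Sum>\<gamma>\<in>?B. ?h \<gamma> *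
        Dsep n (\<lambda>l. qA p i l * qA g j l) (?d \<gamma>) a else 0)"
      unfolding PB_def apply simp
      apply (intro sum.cong refl)
      apply (simp add: pderiv_at_Pw)
      done
    also have "\<dots> = (\<Sum>i<n. \<Sum>j<n. \<Sum>\<gamma>\<in>?B. ?h \<gamma> *
        (if i \<noteq> j then Dsep n (\<lambda>l. qA p i l * qA g j l) (?d \<gamma>) a else 0))"
      by (intro sum.cong refl) simp
    also have "\<dots> = (\<Sum>\<gamma>\<in>?B. ?h \<gamma> * GB n p g (?d \<gamma>) a)"
      unfolding GB_def by (simp add: swap_lemma)
    finally show ?thesis .
  qed
  have C: "pderiv_at n (PC n w g) \<alpha> a = (\<Sum>\<gamma>\<in>?B. ?h \<gamma> * GC n g (?d \<gamma>) a)"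
  proof -
    have "pderiv_at n (PC n w g) \<alpha> a = (\<Sum>i<n. \<Sum>j<n. \<Sum>x<n. \<Sum>\<gamma>\<in>?B. ?h \<gamma> *
        (if i \<noteq> j \<and> i \<noteq> x \<and> j \<noteq> x then Dsep n (\<lambda>l. qA g i l * qA g j l * qA g x l) (?d \<gamma>) a else 0))"
      unfolding PC_def apply simp
      apply (intro sum.cong refl)
      apply (simp add: pderiv_at_Pw)
      done
    also have "\<dots> = (\<Sum>\<gamma>\<in>?B. ?h \<gamma> * GC n g (?d \<gamma>) a)"
      unfolding GC_def by (simp add: swap_lemma)
    finally show ?thesis .
  qed
  have D: "pderiv_at n (PD n w) \<alpha> a = (\<Sum>\<gamma>\<in>?B. ?h \<gamma> * GD n (?d \<gamma>) a)"
    unfolding PD_def GD_def by (rule pderiv_at_Pw)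
  have fA: "fs (PA n w f)" unfolding PA_def by simp
  have fB: "fs (PB n w p g)" unfolding PB_def by simp
  have fC: "fs (PC n w g)" unfolding PC_def by simp
  have fD: "fs (PD n w)" unfolding PD_def by simp
  have "pderiv_at n (Pk n w f p g c C0) \<alpha> a = pderiv_at n (PA n w f) \<alpha> a + pderiv_at n (PB n w p g) \<alpha> a
     + c * pderiv_at n (PC n w g) \<alpha> a + C0 * pderiv_at n (PD n w) \<alpha> a"
    unfolding Pk_def using fA fB fC fD by simp
  also have "\<dots> = (\<Sum>\<gamma>\<in>?B. ?h \<gamma> * Gk n f p g c C0 (?d \<gamma>) a)"
    unfolding A B C D Gk_def by (simp add: sum.distrib sum_distrib_left algebra_simps)
  finally show ?thesis .
qed

lemma vanish_from_G:
  assumes grid: "\<And>i. i < n \<Longrightarrow> a i \<noteq> 0 \<Longrightarrow> poly w (a i) = 0"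
    and G: "\<And>\<beta>. is_mono n \<beta> \<Longrightarrow> mdeg n \<beta> + card {i. i < n \<and> a i \<noteq> 0} < k \<Longrightarrow>
              Gk n f p g c C0 \<beta> a = 0"
  shows "zero_mult_ge n (Pk n w f p g c C0) k a"
  unfolding zero_mult_ge_def
proof (intro allI impI)
  fix \<alpha> assume am: "is_mono n \<alpha>" and ak: "mdeg n \<alpha> < k"
  let ?T = "{i. i < n \<and> a i \<noteq> 0}"
  have "coefH n w \<alpha> \<gamma> a * Gk n f p g c C0 (\<lambda>i. \<alpha> i - \<gamma> i) a = 0" if gb: "\<gamma> \<in> box n \<alpha>" for \<gamma>
  proof (cases "\<exists>i<n. a i \<noteq> 0 \<and> \<gamma> i = 0")
    case True
    then obtain i where i: "i < n" "a i \<noteq> 0" "\<gamma> i = 0" by auto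
    have "coefH n w \<alpha> \<gamma> a = 0"
      unfolding coefH_def using i grid[of i]
      by (intro prod_zero) (auto intro!: bexI[of _ i])
    then show ?thesis by simp
  next
    case False
    then have ge: "\<And>i. i \<in> ?T \<Longrightarrow> 1 \<le> \<gamma> i" by auto
    have le: "\<gamma> i \<le> \<alpha> i" for i using gb am unfolding box_def is_mono_def
      by (cases "i < n") auto
    have "card ?T = (\<Sum>i\<in>?T. 1)" by simp
    also have "\<dots> \<le> (\<Sum>i\<in>?T. \<gamma> i)" using ge by (intro sum_mono) auto
    also have "\<dots> \<le> (\<Sum>i<n. \<gamma> i)" by (intro sum_mono2) auto
    finally have cT: "card ?T \<le> (\<Sum>i<n. \<gamma> i)" .
    have md: "mdeg n (\<lambda>i. \<alpha> i - \<gamma> i) = mdeg n \<alpha> - (\<Sum>i<n. \<gamma> i)"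
      unfolding mdeg_def using le by (simp add: sum_subtractf_nat)
    have "(\<Sum>i<n. \<gamma> i) \<le> mdeg n \<alpha>" unfolding mdeg_def using le by (intro sum_mono) auto
    then have "mdeg n (\<lambda>i. \<alpha> i - \<gamma> i) + card ?T < k" using md cT ak by linarith
    moreover have "is_mono n (\<lambda>i. \<alpha> i - \<gamma> i)" using am by (simp add: is_mono_def)
    ultimately show ?thesis using G by simp
  qed
  then show "pderiv_at n (Pk n w f p g c C0) \<alpha> a = 0"
    unfolding pderiv_at_Pk by (intro sum.neutral ballI) blast
qed

lemma Dsep_K:
  assumes K: "K \<subseteq> {..<n}" and q1: "\<And>l. l < n \<Longrightarrow> l \<notin> K \<Longrightarrow> q l = 1"
  shows "Dsep n q \<beta> a = (if (\<forall>l<n. l \<notin> K \<longrightarrow> \<beta> l = 0) then (\<Prod>l\<in>K. Dv (q l) (\<beta> l) (a l)) else 0)"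
proof -
  have fK: "finite K" using K finite_subset by blast
  have "Dsep n q \<beta> a = (\<Prod>l\<in>K. Dv (q l) (\<beta> l) (a l)) * (\<Prod>l\<in>{..<n} - K. Dv (q l) (\<beta> l) (a l))"
    unfolding Dsep_def using K by (subst prod.subset_diff[of K]) (auto simp: mult.commute)
  also have "(\<Prod>l\<in>{..<n} - K. Dv (q l) (\<beta> l) (a l)) = (\<Prod>l\<in>{..<n} - K. if \<beta> l = 0 then 1 else 0)"
    using q1 by (intro prod.cong refl) (auto simp: Dv_1)
  also have "\<dots> = (if (\<forall>l<n. l \<notin> K \<longrightarrow> \<beta> l = 0) then 1 else 0)"
  proof (cases "\<forall>l<n. l \<notin> K \<longrightarrow> \<beta> l = 0")
    case True then show ?thesis by (intro trans[OF prod.neutral]) auto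
  next
    case False
    then obtain l where "l < n" "l \<notin> K" "\<beta> l \<noteq> 0" by auto
    then show ?thesis by (subst prod_zero) (auto intro!: bexI[of _ l])
  qed
  finally show ?thesis by auto
qed

lemma Dsep_A:
  assumes "i < n"
  shows "Dsep n (qA f i) \<beta> a = (if (\<forall>l<n. l \<noteq> i \<longrightarrow> \<beta> l = 0) then Dv f (\<beta> i) (a i) else 0)"
  using Dsep_K[of "{i}" n "qA f i" \<beta> a] assms by (auto simp: qA_def)

lemma Dsep_B:
  assumes "i < n" "j < n" "i \<noteq> j"
  shows "Dsep n (\<lambda>l. qA f i l * qA g j l) \<beta> a =
    (if (\<forall>l<n. l \<noteq> i \<and> l \<noteq> j \<longrightarrow> \<beta> l = 0) then Dv f (\<beta> i) (a i) * Dv g (\<beta> j) (a j) else 0)"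
  using Dsep_K[of "{i, j}" n "\<lambda>l. qA f i l * qA g j l" \<beta> a] assms by (auto simp: qA_def)

lemma Dsep_C:
  assumes "i < n" "j < n" "x < n" "i \<noteq> j" "i \<noteq> x" "j \<noteq> x"
  shows "Dsep n (\<lambda>l. qA g i l * qA g j l * qA g x l) \<beta> a =
    (if (\<forall>l<n. l \<noteq> i \<and> l \<noteq> j \<and> l \<noteq> x \<longrightarrow> \<beta> l = 0)
     then Dv g (\<beta> i) (a i) * Dv g (\<beta> j) (a j) * Dv g (\<beta> x) (a x) else 0)"
  using Dsep_K[of "{i, j, x}" n "\<lambda>l. qA g i l * qA g j l * qA g x l" \<beta> a] assms
  by (auto simp: qA_def mult_ac)

lemma Dsep_D: "Dsep n (\<lambda>l. 1) \<beta> a = (if (\<forall>l<n. \<beta> l = 0) then 1 else 0)"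
  using Dsep_K[of "{}" n "\<lambda>l. 1" \<beta> a] by simp

lemma sum_ind:
  fixes F :: "nat \<Rightarrow> real"
  assumes "\<And>i. i < n \<Longrightarrow> P i \<Longrightarrow> a i = 0 \<Longrightarrow> F i = 0"
    and "\<And>i. i < n \<Longrightarrow> P i \<Longrightarrow> a i \<noteq> 0 \<Longrightarrow> F i = v"
  shows "(\<Sum>i<n. if P i then F i else 0) = v * card {i. i < n \<and> a i \<noteq> 0 \<and> P i}"
proof -
  have "(\<Sum>i<n. if P i then F i else 0) = (\<Sum>i<n. if i \<in> {i. i < n \<and> a i \<noteq> 0 \<and> P i} then v else 0)"
    using assms by (intro sum.cong refl) auto
  also have "\<dots> = (\<Sum>i\<in>{..<n} \<inter> {i. i < n \<and> a i \<noteq> 0 \<and> P i}. v)"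
    by (rule sum.inter_restrict[symmetric]) simp
  also have "{..<n} \<inter> {i. i < n \<and> a i \<noteq> 0 \<and> P i} = {i. i < n \<and> a i \<noteq> 0 \<and> P i}" by auto
  finally show ?thesis by simp
qed

definition dls :: "nat \<Rightarrow> nat \<Rightarrow> nat \<Rightarrow> nat" where "dls q s = (\<lambda>l. if l = q then s else 0)"

lemma sum_if_const: "(\<Sum>x\<in>A. if b then F x else 0) = (if b then sum F A else (0::real))"
  by (cases b) simp_all

lemma card_T_minus:
  assumes "i < n" "a i \<noteq> 0"
  shows "card {j. j < n \<and> a j \<noteq> 0 \<and> j \<noteq> i} = card {j. j < n \<and> (a j::real) \<noteq> 0} - 1"
proof -
  have "{j. j < n \<and> a j \<noteq> 0 \<and> j \<noteq> i} = {j. j < n \<and> a j \<noteq> 0} - {i}" by auto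
  then show ?thesis using assms by (simp add: card_Diff_singleton)
qed

lemma GA_0:
  assumes "poly f 0 = 0" "\<And>i. i < n \<Longrightarrow> a i \<noteq> 0 \<Longrightarrow> poly f (a i) = fv"
  shows "GA n f (\<lambda>_. 0) a = fv * card {i. i < n \<and> a i \<noteq> 0}"
proof -
  have "GA n f (\<lambda>_. 0) a = (\<Sum>i<n. if True then poly f (a i) else 0)"
    unfolding GA_def by (intro sum.cong refl) (simp add: Dsep_A)
  also have "\<dots> = fv * card {i. i < n \<and> a i \<noteq> 0 \<and> True}"
    by (rule sum_ind) (use assms in auto)
  finally show ?thesis by simp
qed

lemma GA_s:
  assumes "q < n" "s > 0"
  shows "GA n f (dls q s) a = Dv f s (a q)"
proof -
  have "GA n f (dls q s) a = (\<Sum>i<n. if i = q then Dv f s (a q) else 0)"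
    unfolding GA_def using assms by (intro sum.cong refl) (auto simp: Dsep_A dls_def)
  then show ?thesis using assms by simp
qed

lemma GA_11:
  assumes "q < n" "q' < n" "q \<noteq> q'"
  shows "GA n f (\<lambda>l. dls q 1 l + dls q' 1 l) a = 0"
  unfolding GA_def using assms by (intro sum.neutral ballI) (auto simp: Dsep_A dls_def)

lemma GD_0: "GD n (\<lambda>_. 0) a = 1" by (simp add: GD_def Dsep_D)
lemma GD_nz: "q < n \<Longrightarrow> \<beta> q \<noteq> 0 \<Longrightarrow> GD n \<beta> a = 0" by (auto simp: GD_def Dsep_D)

lemma pair_sum:
  fixes F G :: "nat \<Rightarrow> real" and a :: "nat \<Rightarrow> real"
  assumes F0: "\<And>i. i < n \<Longrightarrow> a i = 0 \<Longrightarrow> F i = 0" and FT: "\<And>i. i < n \<Longrightarrow> a i \<noteq> 0 \<Longrightarrow> F i = fv"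
    and G0: "\<And>i. i < n \<Longrightarrow> a i = 0 \<Longrightarrow> G i = 0" and GT: "\<And>i. i < n \<Longrightarrow> a i \<noteq> 0 \<Longrightarrow> G i = gv"
  shows "(\<Sum>i<n. \<Sum>j<n. if P i \<and> P j \<and> i \<noteq> j then F i * G j else 0) =
    fv * gv * of_nat (card {i. i < n \<and> a i \<noteq> 0 \<and> P i} * (card {i. i < n \<and> a i \<noteq> 0 \<and> P i} - 1))"
proof -
  let ?c = "card {i. i < n \<and> a i \<noteq> 0 \<and> P i}"
  have inner: "(\<Sum>j<n. if P i \<and> P j \<and> i \<noteq> j then F i * G j else 0) =
      (if P i then F i * (gv * card {j. j < n \<and> a j \<noteq> 0 \<and> (P j \<and> j \<noteq> i)}) else 0)" if "i < n" for i
  proof -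
    have "(\<Sum>j<n. if P i \<and> P j \<and> i \<noteq> j then F i * G j else 0) =
        (if P i then F i * (\<Sum>j<n. if P j \<and> j \<noteq> i then G j else 0) else 0)"
      by (cases "P i") (auto simp: sum_distrib_left intro!: sum.cong)
    also have "(\<Sum>j<n. if P j \<and> j \<noteq> i then G j else 0) = gv * card {j. j < n \<and> a j \<noteq> 0 \<and> (P j \<and> j \<noteq> i)}"
      by (rule sum_ind) (use G0 GT in auto)
    finally show ?thesis .
  qed
  have "(\<Sum>i<n. \<Sum>j<n. if P i \<and> P j \<and> i \<noteq> j then F i * G j else 0) =
      (\<Sum>i<n. if P i then F i * (gv * card {j. j < n \<and> a j \<noteq> 0 \<and> (P j \<and> j \<noteq> i)}) else 0)"
    using inner by (intro sum.cong refl) auto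
  also have "\<dots> = fv * (gv * (?c - 1)) * ?c"
  proof (rule sum_ind)
    fix i assume i: "i < n" "P i" "a i \<noteq> 0"
    have "{j. j < n \<and> a j \<noteq> 0 \<and> (P j \<and> j \<noteq> i)} = {j. j < n \<and> a j \<noteq> 0 \<and> P j} - {i}" by auto
    then have "card {j. j < n \<and> a j \<noteq> 0 \<and> (P j \<and> j \<noteq> i)} = ?c - 1"
      using i by (simp add: card_Diff_singleton)
    then show "F i * (gv * card {j. j < n \<and> a j \<noteq> 0 \<and> (P j \<and> j \<noteq> i)}) = fv * (gv * (?c - 1))"
      using FT i by simp
  qed (use F0 in auto)
  finally show ?thesis by (simp add: mult_ac)
qed

lemma triple_sum:
  fixes F :: "nat \<Rightarrow> real" and a :: "nat \<Rightarrow> real"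
  assumes F0: "\<And>i. i < n \<Longrightarrow> a i = 0 \<Longrightarrow> F i = 0" and FT: "\<And>i. i < n \<Longrightarrow> a i \<noteq> 0 \<Longrightarrow> F i = 1"
  shows "(\<Sum>i<n. \<Sum>j<n. \<Sum>x<n. if i \<noteq> j \<and> i \<noteq> x \<and> j \<noteq> x then F i * F j * F x else 0) =
    of_nat (card {i. i < n \<and> a i \<noteq> 0} * (card {i. i < n \<and> a i \<noteq> 0} - 1) * (card {i. i < n \<and> a i \<noteq> 0} - 2))"
proof -
  let ?c = "card {i. i < n \<and> a i \<noteq> 0}"
  have inner: "(\<Sum>j<n. \<Sum>x<n. if i \<noteq> j \<and> i \<noteq> x \<and> j \<noteq> x then F i * F j * F x else 0) =
      F i * of_nat (card {j. j < n \<and> a j \<noteq> 0 \<and> j \<noteq> i} * (card {j. j < n \<and> a j \<noteq> 0 \<and> j \<noteq> i} - 1))" for i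
  proof -
    have "(\<Sum>j<n. \<Sum>x<n. if i \<noteq> j \<and> i \<noteq> x \<and> j \<noteq> x then F i * F j * F x else 0) =
        F i * (\<Sum>j<n. \<Sum>x<n. if j \<noteq> i \<and> x \<noteq> i \<and> j \<noteq> x then F j * F x else 0)"
      by (auto simp: sum_distrib_left intro!: sum.cong)
    also have "\<dots> = F i * (1 * 1 * of_nat (card {j. j < n \<and> a j \<noteq> 0 \<and> j \<noteq> i} * (card {j. j < n \<and> a j \<noteq> 0 \<and> j \<noteq> i} - 1)))"
      by (subst pair_sum[where fv = 1 and gv = 1 and a = a]) (use F0 FT in auto)
    finally show ?thesis by simp
  qed
  have "(\<Sum>i<n. \<Sum>j<n. \<Sum>x<n. if i \<noteq> j \<and> i \<noteq> x \<and> j \<noteq> x then F i * F j * F x else 0) =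
     (\<Sum>i<n. if True then F i * of_nat (card {j. j < n \<and> a j \<noteq> 0 \<and> j \<noteq> i} * (card {j. j < n \<and> a j \<noteq> 0 \<and> j \<noteq> i} - 1)) else 0)"
    using inner by simp
  also have "\<dots> = real ((?c - 1) * (?c - 1 - 1)) * real (card {i. i < n \<and> a i \<noteq> 0 \<and> True})"
  proof (rule sum_ind)
    fix i assume i: "i < n" "True" "a i \<noteq> 0"
    then show "F i * of_nat (card {j. j < n \<and> a j \<noteq> 0 \<and> j \<noteq> i} * (card {j. j < n \<and> a j \<noteq> 0 \<and> j \<noteq> i} - 1)) =
       real ((?c - 1) * (?c - 1 - 1))"
      using FT card_T_minus[of i n a] by simp
  qed (use F0 in auto)
  finally show ?thesis
    by (simp add: mult_ac diff_diff_add numeral_2_eq_2)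
qed

lemma dd_outer: "q < (n::nat) \<Longrightarrow> (\<Sum>i<n. \<Sum>j<n. if i = q then F j else 0) = (\<Sum>j<n. F j :: real)"
  by (simp add: sum_if_const sum.delta)

lemma dd_inner: "q < (n::nat) \<Longrightarrow> (\<Sum>i<n. \<Sum>j<n. if j = q then F i else 0) = (\<Sum>i<n. F i :: real)"
  by (simp add: sum.delta)

lemma GB_0:
  assumes "poly p 0 = 0" "poly g 0 = 0"
    "\<And>i. i < n \<Longrightarrow> a i \<noteq> 0 \<Longrightarrow> poly p (a i) = pv" "\<And>i. i < n \<Longrightarrow> a i \<noteq> 0 \<Longrightarrow> poly g (a i) = 1"
  shows "GB n p g (\<lambda>_. 0) a = pv * of_nat (card {i. i < n \<and> a i \<noteq> 0} * (card {i. i < n \<and> a i \<noteq> 0} - 1))"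
proof -
  have "GB n p g (\<lambda>_. 0) a = (\<Sum>i<n. \<Sum>j<n. if True \<and> True \<and> i \<noteq> j then poly p (a i) * poly g (a j) else 0)"
    unfolding GB_def by (intro sum.cong refl) (auto simp: Dsep_B)
  also have "\<dots> = pv * 1 * of_nat (card {i. i < n \<and> a i \<noteq> 0 \<and> True} * (card {i. i < n \<and> a i \<noteq> 0 \<and> True} - 1))"
    by (rule pair_sum) (use assms in auto)
  finally show ?thesis by simp
qed

lemma GB_s:
  assumes "q < n" "s > 0" "poly p 0 = 0" "poly g 0 = 0"
    "\<And>i. i < n \<Longrightarrow> a i \<noteq> 0 \<Longrightarrow> poly p (a i) = pv" "\<And>i. i < n \<Longrightarrow> a i \<noteq> 0 \<Longrightarrow> poly g (a i) = 1"
  shows "GB n p g (dls q s) a = (Dv p s (a q) + Dv g s (a q) * pv) * card {i. i < n \<and> a i \<noteq> 0 \<and> i \<noteq> q}"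
proof -
  let ?X = "\<lambda>j. if j \<noteq> q then Dv p s (a q) * poly g (a j) else 0"
  let ?Y = "\<lambda>i. if i \<noteq> q then poly p (a i) * Dv g s (a q) else 0"
  have "GB n p g (dls q s) a = (\<Sum>i<n. \<Sum>j<n. (if i = q then ?X j else 0) + (if j = q then ?Y i else 0))"
    unfolding GB_def using assms(1,2) by (intro sum.cong refl) (auto simp: Dsep_B dls_def)
  also have "\<dots> = (\<Sum>i<n. \<Sum>j<n. if i = q then ?X j else 0) + (\<Sum>i<n. \<Sum>j<n. if j = q then ?Y i else 0)"
    by (simp add: sum.distrib)
  also have "\<dots> = (\<Sum>j<n. ?X j) + (\<Sum>i<n. ?Y i)"
    using assms(1) by (simp only: dd_outer dd_inner)
  also have "(\<Sum>j<n. ?X j) = Dv p s (a q) * 1 * card {i. i < n \<and> a i \<noteq> 0 \<and> i \<noteq> q}"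
    by (rule sum_ind) (use assms in auto)
  also have "(\<Sum>i<n. ?Y i) = pv * Dv g s (a q) * card {i. i < n \<and> a i \<noteq> 0 \<and> i \<noteq> q}"
    by (rule sum_ind) (use assms in auto)
  finally show ?thesis by (simp add: algebra_simps)
qed

lemma GB_11:
  assumes "q < n" "q' < n" "q \<noteq> q'"
  shows "GB n p g (\<lambda>l. dls q 1 l + dls q' 1 l) a =
     Dv p 1 (a q) * Dv g 1 (a q') + Dv p 1 (a q') * Dv g 1 (a q)"
proof -
  let ?A = "Dv p 1 (a q) * Dv g 1 (a q')" and ?B = "Dv p 1 (a q') * Dv g 1 (a q)"
  have "GB n p g (\<lambda>l. dls q 1 l + dls q' 1 l) a =
     (\<Sum>i<n. \<Sum>j<n. (if i = q then (if j = q' then ?A else 0) else 0) + (if i = q' then (if j = q then ?B else 0) else 0))"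
    unfolding GB_def using assms by (intro sum.cong refl) (auto simp: Dsep_B dls_def)
  also have "\<dots> = ?A + ?B"
    using assms by (simp add: sum.distrib sum_if_const)
  finally show ?thesis .
qed

lemma GC_0:
  assumes "poly g 0 = 0" "\<And>i. i < n \<Longrightarrow> a i \<noteq> 0 \<Longrightarrow> poly g (a i) = 1"
  shows "GC n g (\<lambda>_. 0) a = of_nat (card {i. i < n \<and> a i \<noteq> 0} * (card {i. i < n \<and> a i \<noteq> 0} - 1) * (card {i. i < n \<and> a i \<noteq> 0} - 2))"
proof -
  have "GC n g (\<lambda>_. 0) a = (\<Sum>i<n. \<Sum>j<n. \<Sum>x<n. if i \<noteq> j \<and> i \<noteq> x \<and> j \<noteq> x then
      poly g (a i) * poly g (a j) * poly g (a x) else 0)"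
    unfolding GC_def by (intro sum.cong refl) (auto simp: Dsep_C)
  also have "\<dots> = of_nat (card {i. i < n \<and> a i \<noteq> 0} * (card {i. i < n \<and> a i \<noteq> 0} - 1) * (card {i. i < n \<and> a i \<noteq> 0} - 2))"
    by (rule triple_sum[where F = "\<lambda>i. poly g (a i)"]) (use assms in auto)
  finally show ?thesis .
qed

lemma t1: "q < (n::nat) \<Longrightarrow> (\<Sum>i<n. \<Sum>j<n. \<Sum>x<n. if i = q then Z j x else 0) = (\<Sum>j<n. \<Sum>x<n. Z j x :: real)"
  by (simp add: sum_if_const sum.delta)
lemma t2: "q < (n::nat) \<Longrightarrow> (\<Sum>i<n. \<Sum>j<n. \<Sum>x<n. if j = q then Z i x else 0) = (\<Sum>i<n. \<Sum>x<n. Z i x :: real)"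
  by (simp add: sum_if_const sum.delta)
lemma t3: "q < (n::nat) \<Longrightarrow> (\<Sum>i<n. \<Sum>j<n. \<Sum>x<n. if x = q then Z i j else 0) = (\<Sum>i<n. \<Sum>j<n. Z i j :: real)"
  by (simp add: sum_if_const sum.delta)
lemma t12: "q < (n::nat) \<Longrightarrow> q' < n \<Longrightarrow>
   (\<Sum>i<n. \<Sum>j<n. \<Sum>x<n. if i = q then (if j = q' then Z x else 0) else 0) = (\<Sum>x<n. Z x :: real)"
  by (simp add: sum_if_const sum.delta)
lemma t13: "q < (n::nat) \<Longrightarrow> q' < n \<Longrightarrow>
   (\<Sum>i<n. \<Sum>j<n. \<Sum>x<n. if i = q then (if x = q' then Z j else 0) else 0) = (\<Sum>x<n. Z x :: real)"
  by (simp add: sum_if_const sum.delta)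
lemma t23: "q < (n::nat) \<Longrightarrow> q' < n \<Longrightarrow>
   (\<Sum>i<n. \<Sum>j<n. \<Sum>x<n. if j = q then (if x = q' then Z i else 0) else 0) = (\<Sum>x<n. Z x :: real)"
  by (simp add: sum_if_const sum.delta)

lemma GC_s:
  assumes "q < n" "s > 0" "poly g 0 = 0" "\<And>i. i < n \<Longrightarrow> a i \<noteq> 0 \<Longrightarrow> poly g (a i) = 1"
  shows "GC n g (dls q s) a = 3 * Dv g s (a q) *
     of_nat (card {i. i < n \<and> a i \<noteq> 0 \<and> i \<noteq> q} * (card {i. i < n \<and> a i \<noteq> 0 \<and> i \<noteq> q} - 1))"
proof -
  let ?E = "Dv g s (a q)"
  let ?c = "card {i. i < n \<and> a i \<noteq> 0 \<and> i \<noteq> q}"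
  define Y where "Y u v = (if u \<noteq> q \<and> v \<noteq> q \<and> u \<noteq> v then poly g (a u) * poly g (a v) else 0)" for u v
  have "GC n g (dls q s) a = (\<Sum>i<n. \<Sum>j<n. \<Sum>x<n.
      (if i = q then ?E * Y j x else 0) + (if j = q then ?E * Y i x else 0) + (if x = q then ?E * Y i j else 0))"
    unfolding GC_def Y_def using assms(1,2) by (intro sum.cong refl) (auto simp: Dsep_C dls_def; simp add: mult_ac)
  also have "\<dots> = (\<Sum>j<n. \<Sum>x<n. ?E * Y j x) + (\<Sum>i<n. \<Sum>x<n. ?E * Y i x) + (\<Sum>i<n. \<Sum>j<n. ?E * Y i j)"
    using assms(1) by (simp only: sum.distrib t1 t2 t3)
  also have "(\<Sum>i<n. \<Sum>j<n. ?E * Y i j) = ?E * of_nat (?c * (?c - 1))"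
  proof -
    have "(\<Sum>i<n. \<Sum>j<n. Y i j) = 1 * 1 * of_nat (?c * (?c - 1))"
      unfolding Y_def by (rule pair_sum[where P = "\<lambda>u. u \<noteq> q"]) (use assms in auto)
    then show ?thesis by (simp add: sum_distrib_left[symmetric])
  qed
  finally show ?thesis by simp
qed

lemma GC_11:
  assumes "q < n" "q' < n" "q \<noteq> q'" "poly g 0 = 0" "\<And>i. i < n \<Longrightarrow> a i \<noteq> 0 \<Longrightarrow> poly g (a i) = 1"
  shows "GC n g (\<lambda>l. dls q 1 l + dls q' 1 l) a = 6 * (Dv g 1 (a q) * Dv g 1 (a q')) *
     of_nat (card {i. i < n \<and> a i \<noteq> 0 \<and> i \<noteq> q \<and> i \<noteq> q'})"
proof -
  let ?E = "Dv g 1 (a q) * Dv g 1 (a q')"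
  define Z where "Z u = (if u \<noteq> q \<and> u \<noteq> q' then ?E * poly g (a u) else 0)" for u
  have "GC n g (\<lambda>l. dls q 1 l + dls q' 1 l) a = (\<Sum>i<n. \<Sum>j<n. \<Sum>x<n.
      (if i = q then (if j = q' then Z x else 0) else 0) + (if i = q' then (if j = q then Z x else 0) else 0) +
      (if i = q then (if x = q' then Z j else 0) else 0) + (if i = q' then (if x = q then Z j else 0) else 0) +
      (if j = q then (if x = q' then Z i else 0) else 0) + (if j = q' then (if x = q then Z i else 0) else 0))"
    unfolding GC_def Z_def using assms(1,2,3) by (intro sum.cong refl) (auto simp: Dsep_C dls_def; simp add: mult_ac)
  also have "\<dots> = 6 * (\<Sum>x<n. Z x)"
    using assms(1,2) by (simp only: sum.distrib t12 t13 t23)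
  also have "(\<Sum>x<n. Z x) = ?E * 1 * card {i. i < n \<and> a i \<noteq> 0 \<and> (i \<noteq> q \<and> i \<noteq> q')}"
    unfolding Z_def by (rule sum_ind) (use assms in auto)
  finally show ?thesis by simp
qed

definition wp :: "nat \<Rightarrow> real poly" where "wp m = (\<Prod>t\<in>{1..m}. [:- real t, 1:])"

lemma wp_Suc: "wp (Suc m) = wp m * [:- real (Suc m), 1:]"
  unfolding wp_def by (simp add: prod.nat_ivl_Suc' mult.commute)

lemma wp_dvd: "t \<in> {1..m} \<Longrightarrow> [:- real t, 1:] dvd wp m"
  unfolding wp_def by (rule dvd_prodI) auto

lemma degree_wp: "degree (wp m) = m"
  unfolding wp_def by (subst degree_prod_eq_sum_degree) auto

lemma lead_wp: "lead_coeff (wp m) = 1"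
  unfolding wp_def by (simp add: lead_coeff_prod)

lemma wp_inv:
  "poly (wp m) 0 \<noteq> 0 \<and> poly (wp m) 0 * poly (pderiv (wp m)) 0 \<le> 0 \<and>
   poly (pderiv (pderiv (wp m))) 0 * poly (wp m) 0 \<le> (poly (pderiv (wp m)) 0)^2 \<and>
   (m \<ge> 1 \<longrightarrow> poly (wp m) 0 * poly (pderiv (wp m)) 0 < 0 \<and>
      poly (pderiv (pderiv (wp m))) 0 * poly (wp m) 0 < (poly (pderiv (wp m)) 0)^2)"
proof (induction m)
  case 0 then show ?case by (simp add: wp_def)
next
  case (Suc m)
  define A where "A = poly (wp m) 0"
  define B where "B = poly (pderiv (wp m)) 0"
  define C where "C = poly (pderiv (pderiv (wp m))) 0"
  define c :: real where "c = real (Suc m)"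
  have c: "c > 0" by (simp add: c_def)
  have IH: "A \<noteq> 0" "A * B \<le> 0" "C * A \<le> B^2" using Suc by (simp_all add: A_def B_def C_def)
  have A': "poly (wp (Suc m)) 0 = - c * A" by (simp add: wp_Suc A_def c_def)
  have L: "pderiv [:- c, 1:] = 1" by (simp add: pderiv_pCons)
  have d1: "pderiv (wp (Suc m)) = wp m + [:- c, 1:] * pderiv (wp m)"
    unfolding wp_Suc c_def[symmetric] by (simp only: pderiv_mult L mult_1_right)
  have d2: "pderiv (pderiv (wp (Suc m))) = pderiv (wp m) + (pderiv (wp m) + [:- c, 1:] * pderiv (pderiv (wp m)))"
    unfolding d1 by (simp only: pderiv_add pderiv_mult L mult_1_right)
  have B': "poly (pderiv (wp (Suc m))) 0 = A - c * B"
    unfolding d1 by (simp add: A_def B_def)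
  have C': "poly (pderiv (pderiv (wp (Suc m)))) 0 = 2 * B - c * C"
    unfolding d2 by (simp add: B_def C_def)
  have e1: "(- c * A) * (A - c * B) = - c * A^2 + c^2 * (A * B)" by (simp add: algebra_simps power2_eq_square)
  have "c * A^2 > 0" using c IH(1) by simp
  moreover have "c^2 * (A * B) \<le> 0" using IH(2) by (simp add: mult_nonneg_nonpos)
  ultimately have s1: "(- c * A) * (A - c * B) < 0" using e1 by linarith
  have e2: "(A - c * B)^2 - (2 * B - c * C) * (- c * A) = A^2 + c^2 * (B^2 - C * A)"
    by (simp add: algebra_simps power2_eq_square)
  have "A^2 > 0" using IH(1) by simp
  moreover have "c^2 * (B^2 - C * A) \<ge> 0" using IH(3) by simp
  ultimately have s2: "(2 * B - c * C) * (- c * A) < (A - c * B)^2" using e2 by linarith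
  show ?case unfolding A' B' C' using s1 s2 c IH(1) by simp
qed

definition uu :: "nat \<Rightarrow> real poly" where "uu m = smult (1 / poly (wp m) 0) (wp m)"
definition sg :: "nat \<Rightarrow> real" where "sg m = poly (pderiv (uu m)) 0"
definition ta :: "nat \<Rightarrow> real" where "ta m = poly (pderiv (pderiv (uu m))) 0"

lemma wp0: "poly (wp m) 0 \<noteq> 0" using wp_inv[of m] by simp

lemma uu0: "poly (uu m) 0 = 1" using wp0[of m] by (simp add: uu_def)

lemma uu_dvd: "t \<in> {1..m} \<Longrightarrow> [:- real t, 1:] dvd uu m"
  unfolding uu_def by (rule dvd_smult) (rule wp_dvd)

lemma sg_nz: "m \<ge> 1 \<Longrightarrow> sg m \<noteq> 0"
  using wp_inv[of m] wp0[of m] by (auto simp: sg_def uu_def pderiv_smult)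

lemma ta_ne: "m \<ge> 1 \<Longrightarrow> ta m / 2 - 2 * (sg m)^2 \<noteq> 0"
proof -
  assume m: "m \<ge> 1"
  define A where "A = poly (wp m) 0"
  define B where "B = poly (pderiv (wp m)) 0"
  define C where "C = poly (pderiv (pderiv (wp m))) 0"
  have A: "A \<noteq> 0" "C * A < B^2" using wp_inv[of m] m by (auto simp: A_def B_def C_def)
  have s: "sg m = B / A" and t: "ta m = C / A"
    by (simp_all add: sg_def ta_def uu_def pderiv_smult A_def B_def C_def)
  have "ta m / 2 - 2 * (sg m)^2 = (C * A - 4 * B^2) / (2 * A^2)"
    unfolding s t using A(1) by (simp add: field_simps power2_eq_square)
  moreover have "C * A - 4 * B^2 < 0" using A(2) by (smt (verit) zero_le_power2)
  ultimately show ?thesis using A(1) by simp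
qed

lemma degree_uu: "degree (uu m) = m" using wp0[of m] by (simp add: uu_def degree_wp)
lemma lead_uu: "lead_coeff (uu m) = 1 / poly (wp m) 0"
  using lead_wp[of m] degree_wp[of m] by (simp add: uu_def)

definition ee where "ee m = 1 - uu m"
definition ph3 where "ph3 m = 1 + uu m ^ 2 * [:-1, sg m:]"
definition ph4 where "ph4 m = 1 + uu m ^ 3 * [:-1, 2 * sg m, ta m / 2 - 2 * (sg m)^2:]"
definition p3 where "p3 m = smult (-1/2) (ee m)"
definition p4 where "p4 m = [:-1/2:] - smult (1/2) (uu m) + uu m ^ 2 * [:1, - sg m:]"

lemma Dv_diff: "Dv (f - g) s x = Dv f s x - Dv g s x"
  using Dv_add[of f "-g" s x] Dv_smult[of "-1" g s x] by (simp add: minus_poly.rep_eq)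

lemma Dv_1': "s > 0 \<Longrightarrow> Dv 1 s x = 0" by (simp add: Dv_1)
lemma Dv_const: "s > 0 \<Longrightarrow> Dv [:c:] s x = 0"
  using Dv_smult[of c 1 s x] by (simp add: Dv_1)

lemma Dv1: "Dv f 1 x = poly (pderiv f) x" by (simp add: Dv_def)
lemma Dv2: "Dv f 2 x = poly (pderiv (pderiv f)) x" by (simp add: Dv_def numeral_2_eq_2)
lemma Dv1s: "Dv f (Suc 0) x = poly (pderiv f) x" by (simp add: Dv_def)
lemma Dv2s: "Dv f (Suc (Suc 0)) x = poly (pderiv (pderiv f)) x" by (simp add: Dv_def)

lemma sgr: "poly (pderiv (uu m)) 0 = sg m" by (simp add: sg_def)
lemma tar: "poly (pderiv (pderiv (uu m))) 0 = ta m" by (simp add: ta_def)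

lemmas dsimps = Dv1 Dv2 Dv1s Dv2s power2_eq_square power3_eq_cube pderiv_add pderiv_minus pderiv_diff pderiv_mult pderiv_smult pderiv_pCons uu0 sgr tar

lemma lin_dvd_pow:
  assumes "t \<in> {1..m}"
  shows "[:- real t, 1:] ^ k dvd uu m ^ k * X"
  using uu_dvd[OF assms] by (intro dvd_mult2 dvd_power_same)

lemma uu_t: "t \<in> {1..m} \<Longrightarrow> poly (uu m) (real t) = 0"
  using uu_dvd[of t m] by (auto simp: dvd_iff_poly_eq_0)

lemma ee_0: "poly (ee m) 0 = 0" by (simp add: ee_def uu0)
lemma ee_t: "t \<in> {1..m} \<Longrightarrow> poly (ee m) (real t) = 1" by (simp add: ee_def uu_t)
lemma ee_D: "s > 0 \<Longrightarrow> Dv (ee m) s x = - Dv (uu m) s x"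
  by (simp add: ee_def Dv_diff Dv_1')
lemma ee_D1_0: "Dv (ee m) 1 0 = - sg m" by (subst ee_D) (simp_all add: Dv1 Dv1s sgr)
lemma ee_D2_0: "Dv (ee m) 2 0 = - ta m" by (subst ee_D) (simp_all add: Dv2 Dv2s tar)

lemma ph4_0: "poly (ph4 m) 0 = 0" by (simp add: ph4_def uu0)
lemma ph4_t_D:
  assumes "t \<in> {1..m}" "s < 3"
  shows "Dv (ph4 m) s (real t) = (if s = 0 then 1 else 0)"
proof -
  have "Dv (uu m ^ 3 * [:-1, 2 * sg m, ta m / 2 - 2 * (sg m)^2:]) s (real t) = 0"
    by (rule Dv_root[OF lin_dvd_pow[OF assms(1)]]) (use assms(2) in simp)
  then show ?thesis by (simp add: ph4_def Dv_add Dv_1)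
qed
lemma ph4_D1_0: "Dv (ph4 m) 1 0 = - sg m"
  by (simp add: ph4_def dsimps algebra_simps)
lemma ph4_D2_0: "Dv (ph4 m) 2 0 = 2 * (sg m)^2 - 2 * ta m"
  by (simp add: ph4_def dsimps algebra_simps power2_eq_square)

lemma p4_0: "poly (p4 m) 0 = 0" by (simp add: p4_def uu0)
lemma p4_t: "t \<in> {1..m} \<Longrightarrow> poly (p4 m) (real t) = -1/2" by (simp add: p4_def uu_t)
lemma p4_t_D1: 
  assumes "t \<in> {1..m}"
  shows "Dv (p4 m) 1 (real t) = Dv (ee m) 1 (real t) / 2"
proof -
  have "Dv (uu m ^ 2 * [:1, - sg m:]) 1 (real t) = 0"
    by (rule Dv_root[OF lin_dvd_pow[OF assms(1)]]) simp
  then show ?thesis by (simp add: p4_def Dv_add Dv_diff Dv_smult Dv_const ee_D del: power2_eq_square)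
qed
lemma p4_D1_0: "Dv (p4 m) 1 0 = sg m / 2"
  by (simp add: p4_def dsimps algebra_simps)
lemma p4_D2_0: "Dv (p4 m) 2 0 = 3/2 * ta m - 2 * (sg m)^2"
  by (simp add: p4_def dsimps algebra_simps power2_eq_square)

lemma ph3_0: "poly (ph3 m) 0 = 0" by (simp add: ph3_def uu0)
lemma ph3_t_D:
  assumes "t \<in> {1..m}" "s < 2"
  shows "Dv (ph3 m) s (real t) = (if s = 0 then 1 else 0)"
proof -
  have "Dv (uu m ^ 2 * [:-1, sg m:]) s (real t) = 0"
    by (rule Dv_root[OF lin_dvd_pow[OF assms(1)]]) (use assms(2) in simp)
  then show ?thesis by (simp add: ph3_def Dv_add Dv_1)
qed
lemma ph3_D1_0: "Dv (ph3 m) 1 0 = - sg m"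
  by (simp add: ph3_def dsimps algebra_simps)

lemma p3_0: "poly (p3 m) 0 = 0" by (simp add: p3_def ee_0)
lemma p3_t: "t \<in> {1..m} \<Longrightarrow> poly (p3 m) (real t) = -1/2" by (simp add: p3_def ee_t)
lemma p3_D: "Dv (p3 m) s x = -1/2 * Dv (ee m) s x" by (simp only: p3_def Dv_smult)

lemma mdeg_dls: "q < n \<Longrightarrow> mdeg n (dls q s) = s"
  by (simp add: mdeg_def dls_def)

lemma mdeg_dls2: "q < n \<Longrightarrow> q' < n \<Longrightarrow> q \<noteq> q' \<Longrightarrow> mdeg n (\<lambda>l. dls q 1 l + dls q' 1 l) = 2"
  by (simp add: mdeg_def dls_def sum.distrib)

lemma shapes:
  assumes mono: "is_mono n \<beta>" and deg: "mdeg n \<beta> \<le> 2"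
  shows "\<beta> = (\<lambda>_. 0) \<or> (\<exists>q<n. \<exists>s. 0 < s \<and> s \<le> 2 \<and> \<beta> = dls q s) \<or>
         (\<exists>q<n. \<exists>q'<n. q \<noteq> q' \<and> \<beta> = (\<lambda>l. dls q 1 l + dls q' 1 l))"
proof (cases "\<forall>i<n. \<beta> i = 0")
  case True
  then have "\<beta> = (\<lambda>_. 0)" using mono unfolding is_mono_def fun_eq_iff
    by (metis not_less)
  then show ?thesis by simp
next
  case False
  then obtain q where q: "q < n" "\<beta> q > 0" by auto
  have bq: "\<beta> q \<le> 2" using deg q unfolding mdeg_def
    by (metis finite_lessThan lessThan_iff member_le_sum zero_le le_trans)
  show ?thesis
  proof (cases "\<forall>i<n. i \<noteq> q \<longrightarrow> \<beta> i = 0")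
    case True
    then have "\<beta> = dls q (\<beta> q)" using mono q unfolding is_mono_def fun_eq_iff dls_def
      by (metis not_less)
    then show ?thesis using q bq by blast
  next
    case False
    then obtain q' where q': "q' < n" "q' \<noteq> q" "\<beta> q' > 0" by auto
    have s2: "\<beta> q + \<beta> q' \<le> 2"
    proof -
      have "\<beta> q + \<beta> q' = (\<Sum>i\<in>{q, q'}. \<beta> i)" using q' by simp
      also have "\<dots> \<le> (\<Sum>i<n. \<beta> i)" using q q' by (intro sum_mono2) auto
      finally show ?thesis using deg by (simp add: mdeg_def)
    qed
    have others: "\<beta> l = 0" if "l < n" "l \<noteq> q" "l \<noteq> q'" for l
    proof -
      have "\<beta> q + \<beta> q' + \<beta> l = (\<Sum>i\<in>{q, q', l}. \<beta> i)" using q' that by simp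
      also have "\<dots> \<le> (\<Sum>i<n. \<beta> i)" using q q' that by (intro sum_mono2) auto
      finally show ?thesis using deg q q' by (simp add: mdeg_def)
    qed
    have "\<beta> = (\<lambda>l. dls q 1 l + dls q' 1 l)"
    proof
      fix l show "\<beta> l = dls q 1 l + dls q' 1 l"
        using others[of l] q q' s2 mono by (cases "l < n") (auto simp: dls_def is_mono_def)
    qed
    then show ?thesis using q q' by blast
  qed
qed

definition gridpt :: "nat \<Rightarrow> nat \<Rightarrow> (nat \<Rightarrow> real) \<Rightarrow> bool" where
  "gridpt m n a \<longleftrightarrow> (\<forall>i<n. a i \<noteq> 0 \<longrightarrow> (\<exists>t\<in>{1..m}. a i = real t))"

lemma card_minus_q:
  assumes "q < n"
  shows "card {i. i < n \<and> a i \<noteq> 0 \<and> i \<noteq> q} = (if a q = 0 then card {i. i < n \<and> (a i::real) \<noteq> 0} else card {i. i < n \<and> a i \<noteq> 0} - 1)"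
  using card_T_minus[of q n a] assms
  by (cases "a q = 0") (auto intro!: arg_cong[where f = card])

lemma gridE:
  assumes "gridpt m n a" "i < n" "a i \<noteq> 0"
  obtains t where "t \<in> {1..m}" "a i = real t"
  using assms unfolding gridpt_def by blast

lemma grid_vals:
  assumes "gridpt m n a"
  shows "\<And>i. i < n \<Longrightarrow> a i \<noteq> 0 \<Longrightarrow> poly (ph4 m) (a i) = 1"
    and "\<And>i. i < n \<Longrightarrow> a i \<noteq> 0 \<Longrightarrow> poly (ph3 m) (a i) = 1"
    and "\<And>i. i < n \<Longrightarrow> a i \<noteq> 0 \<Longrightarrow> poly (p4 m) (a i) = -1/2"
    and "\<And>i. i < n \<Longrightarrow> a i \<noteq> 0 \<Longrightarrow> poly (p3 m) (a i) = -1/2"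
    and "\<And>i. i < n \<Longrightarrow> a i \<noteq> 0 \<Longrightarrow> poly (ee m) (a i) = 1"
  using assms ph4_t_D[of _ m 0] ph3_t_D[of _ m 0] p4_t[of _ m] p3_t[of _ m] ee_t[of _ m]
  by (auto elim!: gridE)

lemma D1s: "Dv (ph4 m) (Suc 0) 0 = - sg m" "Dv (p4 m) (Suc 0) 0 = sg m / 2" "Dv (ee m) (Suc 0) 0 = - sg m"
  "Dv (ph3 m) (Suc 0) 0 = - sg m"
  using ph4_D1_0[of m] p4_D1_0[of m] ee_D1_0[of m] ph3_D1_0[of m] by simp_all

lemma G4:
  assumes gp: "gridpt m n a" and mono: "is_mono n \<beta>"
    and deg: "mdeg n \<beta> + card {i. i < n \<and> a i \<noteq> 0} < 4" and r1: "card {i. i < n \<and> a i \<noteq> 0} \<ge> 1"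
  shows "Gk n (ph4 m) (p4 m) (ee m) (1/6) (-1) \<beta> a = 0"
proof -
  let ?T = "{i. i < n \<and> a i \<noteq> 0}"
  define r where "r = card ?T"
  have vals: "poly (ph4 m) 0 = 0" "poly (p4 m) 0 = 0" "poly (ee m) 0 = 0"
    by (simp_all add: ph4_0 p4_0 ee_0)
  note gv = grid_vals[OF gp]
  have "mdeg n \<beta> \<le> 2" using deg r1 by simp
  then consider (z) "\<beta> = (\<lambda>_. 0)" | (s) q s where "q < n" "0 < s" "s \<le> 2" "\<beta> = dls q s"
    | (two) q q' where "q < n" "q' < n" "q \<noteq> q'" "\<beta> = (\<lambda>l. dls q 1 l + dls q' 1 l)"
    using shapes[OF mono] by blast
  then show ?thesis
  proof cases
    case z
    have "Gk n (ph4 m) (p4 m) (ee m) (1/6) (-1) \<beta> a =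
       1 * r + (-1/2) * of_nat (r * (r - 1)) + 1/6 * of_nat (r * (r - 1) * (r - 2)) - 1"
      unfolding z Gk_def r_def
      by (subst GA_0[where fv = 1], (use vals gv in auto)[2],
          subst GB_0[where pv = "-1/2"], (use vals gv in auto)[4],
          subst GC_0, (use vals gv in auto)[2]) (simp add: GD_0)
    moreover have "r \<in> {1, 2, 3}" using deg r1 unfolding r_def by auto
    ultimately show ?thesis by auto
  next
    case s
    have GD: "GD n (dls q s) a = 0" using s by (intro GD_nz[of q]) (auto simp: dls_def)
    have rs: "s + r < 4" using deg s by (simp add: mdeg_dls r_def)
    define rq where "rq = card {i. i < n \<and> a i \<noteq> 0 \<and> i \<noteq> q}"
    have G: "Gk n (ph4 m) (p4 m) (ee m) (1/6) (-1) \<beta> a =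
       Dv (ph4 m) s (a q) + (Dv (p4 m) s (a q) + Dv (ee m) s (a q) * (-1/2)) * rq
        + 1/6 * (3 * Dv (ee m) s (a q) * of_nat (rq * (rq - 1)))"
      unfolding Gk_def GD s(4) rq_def using s(1,2)
      by (subst GA_s, simp_all, subst GB_s[where pv = "-1/2"], (use vals gv in auto)[6],
          subst GC_s, (use vals gv in auto)[4]) (simp add: GD)
    show ?thesis
    proof (cases "a q = 0")
      case True
      then have rq: "rq = r" unfolding rq_def r_def using card_minus_q[OF s(1), of a] by simp
      consider "s = 1" | "s = 2" using s by linarith
      then show ?thesis
      proof cases
        case 1
        then have "r \<in> {1, 2}" using rs r1 unfolding r_def by auto
        then show ?thesis unfolding G rq 1 True ph4_D1_0 p4_D1_0 ee_D1_0
          by auto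
      next
        case 2
        then have "r = 1" using rs r1 unfolding r_def by auto
        then show ?thesis unfolding G rq 2 True ph4_D2_0 p4_D2_0 ee_D2_0
          by simp
      qed
    next
      case False
      then obtain t where t: "t \<in> {1..m}" "a q = real t" using gp s(1) by (auto elim: gridE)
      then have rq: "rq = r - 1" unfolding rq_def r_def using card_minus_q[OF s(1), of a] False by simp
      consider "s = 1" | "s = 2" using s by linarith
      then show ?thesis
      proof cases
        case 1
        then have "r \<in> {1, 2}" using rs r1 unfolding r_def by auto
        then show ?thesis unfolding G rq using 1 t ph4_t_D[OF t(1), of 1] p4_t_D1[OF t(1)]
          by auto
      next
        case 2
        then have "r = 1" using rs r1 unfolding r_def by auto
        then show ?thesis unfolding G rq using 2 t ph4_t_D[OF t(1), of 2]
          by simp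
      qed
    qed
  next
    case two
    have GD: "GD n (\<lambda>l. dls q 1 l + dls q' 1 l) a = 0" using two by (intro GD_nz[of q]) (auto simp: dls_def)
    have "mdeg n \<beta> = 2" unfolding two(4) using two(1-3) by (rule mdeg_dls2)
    then have "r = 1" using deg r1 by (simp add: r_def)
    then obtain t0 where T: "?T = {t0}" unfolding r_def by (auto simp: card_Suc_eq)
    have G: "Gk n (ph4 m) (p4 m) (ee m) (1/6) (-1) \<beta> a =
        Dv (p4 m) 1 (a q) * Dv (ee m) 1 (a q') + Dv (p4 m) 1 (a q') * Dv (ee m) 1 (a q)
        + 1/6 * (6 * (Dv (ee m) 1 (a q) * Dv (ee m) 1 (a q')) * of_nat (card ({t0} - {q, q'})))"
    proof -
      have c: "{i. i < n \<and> a i \<noteq> 0 \<and> i \<noteq> q \<and> i \<noteq> q'} = {t0} - {q, q'}" using T by auto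
      show ?thesis
        unfolding Gk_def GD two(4) using two(1-3)
        by (simp add: GA_11 GB_11 GC_11[where a = a] ee_0 gv c del: One_nat_def)
    qed
    have aq: "a q = 0 \<longleftrightarrow> q \<noteq> t0" and aq': "a q' = 0 \<longleftrightarrow> q' \<noteq> t0"
      using T two(1,2) by blast+
    show ?thesis
    proof (cases "q = t0")
      case True
      then have "a q \<noteq> 0" "a q' = 0" using aq aq' two(3) by auto
      then obtain t where t: "t \<in> {1..m}" "a q = real t" using gp two(1) by (auto elim: gridE)
      show ?thesis unfolding G using True \<open>a q' = 0\<close> t p4_t_D1[OF t(1)] two(3)
        by (simp add: p4_D1_0 ee_D1_0 D1s)
    next
      case False
      show ?thesis
      proof (cases "q' = t0")
        case True
        then have "a q' \<noteq> 0" "a q = 0" using aq aq' False by auto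
        then obtain t where t: "t \<in> {1..m}" "a q' = real t" using gp two(2) by (auto elim: gridE)
        show ?thesis unfolding G using True False \<open>a q = 0\<close> t p4_t_D1[OF t(1)]
          by (simp add: p4_D1_0 ee_D1_0 D1s)
      next
        case False': False
        then have "a q = 0" "a q' = 0" using aq aq' False by auto
        then show ?thesis unfolding G using False False'
          by (simp add: p4_D1_0 ee_D1_0 D1s power2_eq_square)
      qed
    qed
  qed
qed

lemma G3:
  assumes gp: "gridpt m n a" and mono: "is_mono n \<beta>"
    and deg: "mdeg n \<beta> + card {i. i < n \<and> a i \<noteq> 0} < 3" and r1: "card {i. i < n \<and> a i \<noteq> 0} \<ge> 1"
  shows "Gk n (ph3 m) (p3 m) (ee m) 0 (-1) \<beta> a = 0"
proof -
  let ?T = "{i. i < n \<and> a i \<noteq> 0}"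
  define r where "r = card ?T"
  have vals: "poly (ph3 m) 0 = 0" "poly (p3 m) 0 = 0" "poly (ee m) 0 = 0"
    by (simp_all add: ph3_0 p3_0 ee_0)
  note gv = grid_vals[OF gp]
  have "mdeg n \<beta> \<le> 2" using deg r1 by simp
  then consider (z) "\<beta> = (\<lambda>_. 0)" | (s) q s where "q < n" "0 < s" "s \<le> 2" "\<beta> = dls q s"
    | (two) q q' where "q < n" "q' < n" "q \<noteq> q'" "\<beta> = (\<lambda>l. dls q 1 l + dls q' 1 l)"
    using shapes[OF mono] by blast
  then show ?thesis
  proof cases
    case z
    have "Gk n (ph3 m) (p3 m) (ee m) 0 (-1) \<beta> a =
       1 * r + (-1/2) * of_nat (r * (r - 1)) - 1"
      unfolding z Gk_def r_def
      by (subst GA_0[where fv = 1], (use vals gv in auto)[2],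
          subst GB_0[where pv = "-1/2"], (use vals gv in auto)[4]) (simp add: GD_0)
    moreover have "r \<in> {1, 2}" using deg r1 unfolding r_def by auto
    ultimately show ?thesis by auto
  next
    case s
    have GD: "GD n (dls q s) a = 0" using s by (intro GD_nz[of q]) (auto simp: dls_def)
    have rs: "s + r < 3" using deg s by (simp add: mdeg_dls r_def)
    then have s1: "s = 1" "r = 1" using s r1 unfolding r_def by auto
    define rq where "rq = card {i. i < n \<and> a i \<noteq> 0 \<and> i \<noteq> q}"
    have G: "Gk n (ph3 m) (p3 m) (ee m) 0 (-1) \<beta> a =
       Dv (ph3 m) 1 (a q) + (Dv (p3 m) 1 (a q) + Dv (ee m) 1 (a q) * (-1/2)) * rq"
      unfolding Gk_def s(4) s1 rq_def
      using s(1) GD[unfolded s1]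
      by (simp add: GA_s GB_s[where pv = "-1/2" and a = a] vals gv del: One_nat_def)
    show ?thesis
    proof (cases "a q = 0")
      case True
      then have rq: "rq = 1" unfolding rq_def using card_minus_q[OF s(1), of a] s1 r_def by simp
      show ?thesis unfolding G rq True p3_D ph3_D1_0 ee_D1_0 by simp
    next
      case False
      then obtain t where t: "t \<in> {1..m}" "a q = real t" using gp s(1) by (auto elim: gridE)
      then have rq: "rq = 0" unfolding rq_def using card_minus_q[OF s(1), of a] False s1 r_def by simp
      show ?thesis unfolding G rq using ph3_t_D[OF t(1), of 1] t by simp
    qed
  next
    case two
    have "mdeg n \<beta> = 2" unfolding two(4) using two(1-3) by (rule mdeg_dls2)
    then show ?thesis using deg r1 by simp
  qed
qed

lemma G2:
  assumes gp: "gridpt m n a" and mono: "is_mono n \<beta>"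
    and deg: "mdeg n \<beta> + card {i. i < n \<and> a i \<noteq> 0} < 2" and r1: "card {i. i < n \<and> a i \<noteq> 0} \<ge> 1"
  shows "Gk n (ee m) 0 (ee m) 0 (-1) \<beta> a = 0"
proof -
  have vals: "poly (ee m) 0 = 0" "poly (0::real poly) 0 = 0" by (simp_all add: ee_0)
  note gv = grid_vals[OF gp]
  have r: "card {i. i < n \<and> a i \<noteq> 0} = 1" and d0: "mdeg n \<beta> = 0" using deg r1 by auto
  then have "mdeg n \<beta> \<le> 2" by simp
  then consider (z) "\<beta> = (\<lambda>_. 0)" | (s) q s where "q < n" "0 < s" "s \<le> 2" "\<beta> = dls q s"
    | (two) q q' where "q < n" "q' < n" "q \<noteq> q'" "\<beta> = (\<lambda>l. dls q 1 l + dls q' 1 l)"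
    using shapes[OF mono] by blast
  then show ?thesis
  proof cases
    case z
    show ?thesis
      unfolding z Gk_def
      by (subst GA_0[where fv = 1], (use vals gv in auto)[2],
          subst GB_0[where pv = 0], (use vals gv in auto)[4]) (simp add: GD_0 r)
  next
    case s then show ?thesis using d0 by (simp add: mdeg_dls)
  next
    case two
    have "mdeg n \<beta> = 2" unfolding two(4) using two(1-3) by (rule mdeg_dls2)
    then show ?thesis using d0 by simp
  qed
qed

lemma nodiv:
  assumes le: "\<And>l. l < n \<Longrightarrow> \<beta> l \<le> N l" and lt: "(\<Sum>l<n. N l div (m + 1)) < k"
  shows "\<not> divisible_by_k_powers n m k \<beta>"
proof
  assume "divisible_by_k_powers n m k \<beta>"
  then obtain j where j: "\<forall>t<k. j t < n" "\<forall>i<n. (m + 1) * card {t. t < k \<and> j t = i} \<le> \<beta> i"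
    unfolding divisible_by_k_powers_def by blast
  have "{..<k} = (\<Union>l\<in>{..<n}. {t. t < k \<and> j t = l})" using j(1) by auto
  then have "k = card (\<Union>l\<in>{..<n}. {t. t < k \<and> j t = l})" by (metis card_lessThan)
  also have "\<dots> = (\<Sum>l<n. card {t. t < k \<and> j t = l})"
    by (rule card_UN_disjoint) auto
  also have "\<dots> \<le> (\<Sum>l<n. N l div (m + 1))"
  proof (rule sum_mono)
    fix l assume "l \<in> {..<n}"
    then have "(m + 1) * card {t. t < k \<and> j t = l} \<le> N l" using j(2) le[of l] by force
    then show "card {t. t < k \<and> j t = l} \<le> N l div (m + 1)"
      by (simp add: less_eq_div_iff_mult_less_eq mult.commute)
  qed
  finally show False using lt by simp
qed

lemma top_sep:
  assumes md: "mdeg n \<beta> = (\<Sum>l<n. degree (f l))"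
  shows "sep n f \<beta> = (if \<beta> = (\<lambda>l. if l < n then degree (f l) else 0) then (\<Prod>l<n. lead_coeff (f l)) else 0)"
proof (cases "\<beta> = (\<lambda>l. if l < n then degree (f l) else 0)")
  case True
  then show ?thesis by (simp add: sep_def is_mono_def)
next
  case False
  have "sep n f \<beta> = 0"
  proof (rule ccontr)
    assume nz: "sep n f \<beta> \<noteq> 0"
    then have b: "\<beta> \<in> box n (\<lambda>i. degree (f i))" by (rule sep_support)
    then have le: "\<And>l. l < n \<Longrightarrow> \<beta> l \<le> degree (f l)" and z: "\<And>l. l \<ge> n \<Longrightarrow> \<beta> l = 0"
      by (auto simp: box_def)
    from False obtain l where l: "\<beta> l \<noteq> (if l < n then degree (f l) else 0)" by auto
    then have ln: "l < n" using z by (cases "l < n") auto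
    then have "\<beta> l < degree (f l)" using l le[of l] by simp
    then have "(\<Sum>l<n. \<beta> l) < (\<Sum>l<n. degree (f l))"
      using ln le by (intro sum_strict_mono_ex1) auto
    then show False using md by (simp add: mdeg_def)
  qed
  then show ?thesis using False by simp
qed

lemma qA_degree: "degree (qA f i l) = (if l = i then degree f else 0)"
  by (simp add: qA_def)

lemma Pk_support:
  assumes "Pk n w f p g c C0 \<beta> \<noteq> 0"
  shows "(\<exists>i<n. sep n (\<lambda>l. w * qA f i l) \<beta> \<noteq> 0) \<or>
         (\<exists>i<n. \<exists>j<n. i \<noteq> j \<and> sep n (\<lambda>l. w * (qA p i l * qA g j l)) \<beta> \<noteq> 0) \<or>
         (c \<noteq> 0 \<and> (\<exists>i<n. \<exists>j<n. \<exists>x<n. i \<noteq> j \<and> i \<noteq> x \<and> j \<noteq> x \<and>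
             sep n (\<lambda>l. w * (qA g i l * qA g j l * qA g x l)) \<beta> \<noteq> 0)) \<or>
         (C0 \<noteq> 0 \<and> sep n (\<lambda>l. w * 1) \<beta> \<noteq> 0)"
proof -
  have "PA n w f \<beta> \<noteq> 0 \<or> PB n w p g \<beta> \<noteq> 0 \<or> (c \<noteq> 0 \<and> PC n w g \<beta> \<noteq> 0) \<or> (C0 \<noteq> 0 \<and> PD n w \<beta> \<noteq> 0)"
    using assms unfolding Pk_def by auto
  then consider "PA n w f \<beta> \<noteq> 0" | "PB n w p g \<beta> \<noteq> 0" | "c \<noteq> 0" "PC n w g \<beta> \<noteq> 0"
    | "C0 \<noteq> 0" "PD n w \<beta> \<noteq> 0" by blast
  then show ?thesis
  proof cases
    case 1
    then obtain i where "i \<in> {..<n}" "sep n (\<lambda>l. w * qA f i l) \<beta> \<noteq> 0"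
      unfolding PA_def by (rule sum.not_neutral_contains_not_neutral)
    then show ?thesis by auto
  next
    case 2
    then obtain i where i: "i \<in> {..<n}" "(\<Sum>j<n. if i \<noteq> j then sep n (\<lambda>l. w * (qA p i l * qA g j l)) \<beta> else 0) \<noteq> 0"
      unfolding PB_def by (rule sum.not_neutral_contains_not_neutral)
    from i(2) obtain j where "j \<in> {..<n}" "(if i \<noteq> j then sep n (\<lambda>l. w * (qA p i l * qA g j l)) \<beta> else 0) \<noteq> 0"
      by (rule sum.not_neutral_contains_not_neutral)
    then show ?thesis using i(1) by (auto split: if_splits)
  next
    case 3
    obtain i where i: "i \<in> {..<n}" "(\<Sum>j<n. \<Sum>x<n. if i \<noteq> j \<and> i \<noteq> x \<and> j \<noteq> x then
       sep n (\<lambda>l. w * (qA g i l * qA g j l * qA g x l)) \<beta> else 0) \<noteq> 0"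
      using 3(2)[unfolded PC_def] by (rule sum.not_neutral_contains_not_neutral)
    from i(2) obtain j where j: "j \<in> {..<n}" "(\<Sum>x<n. if i \<noteq> j \<and> i \<noteq> x \<and> j \<noteq> x then
       sep n (\<lambda>l. w * (qA g i l * qA g j l * qA g x l)) \<beta> else 0) \<noteq> 0"
      by (rule sum.not_neutral_contains_not_neutral)
    from j(2) obtain x where "x \<in> {..<n}" "(if i \<noteq> j \<and> i \<noteq> x \<and> j \<noteq> x then
       sep n (\<lambda>l. w * (qA g i l * qA g j l * qA g x l)) \<beta> else 0) \<noteq> 0"
      by (rule sum.not_neutral_contains_not_neutral)
    then have "x < n" "i \<noteq> j \<and> i \<noteq> x \<and> j \<noteq> x \<and> sep n (\<lambda>l. w * (qA g i l * qA g j l * qA g x l)) \<beta> \<noteq> 0"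
      by (auto split: if_splits)
    then have "c \<noteq> 0 \<and> (\<exists>i<n. \<exists>j<n. \<exists>x<n. i \<noteq> j \<and> i \<noteq> x \<and> j \<noteq> x \<and>
             sep n (\<lambda>l. w * (qA g i l * qA g j l * qA g x l)) \<beta> \<noteq> 0)"
      using i(1) j(1) 3(1) by blast
    then show ?thesis by blast
  next
    case 4
    then show ?thesis unfolding PD_def by auto
  qed
qed

lemma mdeg_le_sep:
  assumes "sep n f \<beta> \<noteq> 0"
  shows "mdeg n \<beta> \<le> (\<Sum>l<n. degree (f l))" and "\<And>l. l < n \<Longrightarrow> \<beta> l \<le> degree (f l)"
  using sep_support[OF assms] unfolding mdeg_def box_def by (auto intro: sum_mono)

definition mu :: "nat \<Rightarrow> nat \<Rightarrow> nat \<Rightarrow> nat \<Rightarrow> mono" where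
  "mu n m D i = (\<lambda>j. if j < n then m + (if j = i then D else 0) else 0)"

lemma wpoly_mu: "wpoly n m D (\<lambda>_. 0) \<beta> = (\<Sum>i<n. if \<beta> = mu n m D i then 1 else 0)"
  unfolding wpoly_def mu_def by (simp only: mult_0_right add_0_right)

lemma mdeg_mu: "i < n \<Longrightarrow> mdeg n (mu n m D i) = m * n + D"
  unfolding mdeg_def mu_def by (simp add: sum.distrib)

lemma sum_delta_nat: "i < (n::nat) \<Longrightarrow> (\<Sum>l<n. (if l = i then (x::nat) else 0)) = x" by simp

lemma deg_factor_A: "degree (w * qA f i l) \<le> degree w + (if l = i then degree f else 0)"
  for w f :: "real poly"
  by (cases "l = i") (auto simp: qA_def intro: degree_mult_le)

lemma deg_factor_B: "degree (w * (qA p i l * qA g j l)) \<le> degree w + (if l = i then degree p else 0) + (if l = j then degree g else 0)"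
  for w p g :: "real poly"
proof -
  have "degree (w * (qA p i l * qA g j l)) \<le> degree w + degree (qA p i l * qA g j l)" by (rule degree_mult_le)
  also have "degree (qA p i l * qA g j l) \<le> degree (qA p i l) + degree (qA g j l)" by (rule degree_mult_le)
  finally show ?thesis by (auto simp: qA_def)
qed

lemma deg_factor_C: "degree (w * (qA g i l * qA g j l * qA g x l)) \<le>
   degree w + (if l = i then degree g else 0) + (if l = j then degree g else 0) + (if l = x then degree g else 0)"
  for w g :: "real poly"
proof -
  have "degree (w * (qA g i l * qA g j l * qA g x l)) \<le> degree w + degree (qA g i l * qA g j l * qA g x l)" by (rule degree_mult_le)
  also have "degree (qA g i l * qA g j l * qA g x l) \<le> degree (qA g i l * qA g j l) + degree (qA g x l)" by (rule degree_mult_le)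
  also have "degree (qA g i l * qA g j l) \<le> degree (qA g i l) + degree (qA g j l)" by (rule degree_mult_le)
  finally show ?thesis by (auto simp: qA_def)
qed

lemma div_helper:
  fixes m k :: nat
  assumes "m \<ge> 1" "k \<ge> 2"
  shows "(m + ((m + 1) * (k - 1) - 1)) div (m + 1) = k - 1"
proof -
  obtain k' where k: "k = Suc (Suc k')" using assms(2) by (metis add_2_eq_Suc le_Suc_ex)
  obtain m' where mm: "m = Suc m'" using assms(1) by (cases m) auto
  have e: "m + ((m + 1) * (k - 1) - 1) = m' + (k - 1) * (m + 1)"
    unfolding k mm by (simp add: algebra_simps)
  have "(m' + (k - 1) * (m + 1)) div (m + 1) = (k - 1) + m' div (m + 1)"
    by (rule div_mult_self1) simp
  moreover have "m' div (m + 1) = 0" using mm by simp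
  ultimately show ?thesis unfolding e by simp
qed

lemma sep_good:
  assumes nz: "sep n F \<beta> \<noteq> 0" and dN: "\<And>l. l < n \<Longrightarrow> degree (F l) \<le> N l"
    and sB: "(\<Sum>l<n. N l) \<le> B" and sK: "(\<Sum>l<n. N l div (m + 1)) < k"
  shows "is_mono n \<beta> \<and> mdeg n \<beta> \<le> B \<and> \<not> divisible_by_k_powers n m k \<beta>"
proof -
  have b: "\<beta> \<in> box n (\<lambda>i. degree (F i))" by (rule sep_support[OF nz])
  then have le: "\<And>l. l < n \<Longrightarrow> \<beta> l \<le> N l" using dN by (auto simp: box_def intro: le_trans)
  have "is_mono n \<beta>" using b by (auto simp: box_def is_mono_def)
  moreover have "mdeg n \<beta> \<le> B" unfolding mdeg_def using le sB
    by (meson lessThan_iff order_trans sum_mono)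
  moreover have "\<not> divisible_by_k_powers n m k \<beta>" by (rule nodiv[OF le sK])
  ultimately show ?thesis by blast
qed

lemma div_m_zero: "(m::nat) div (m + 1) = 0" by simp
lemma div_2m: "(m::nat) \<ge> 1 \<Longrightarrow> (m + m) div (m + 1) = 1"
proof -
  assume "m \<ge> 1"
  then have e: "m + m = (m - 1) + 1 * (m + 1)" by simp
  have "((m - 1) + 1 * (m + 1)) div (m + 1) = 1 + (m - 1) div (m + 1)"
    by (rule div_mult_self1) simp
  moreover have "(m - 1) div (m + 1) = 0" by simp
  ultimately show ?thesis unfolding e by simp
qed

lemma Pk_reduced:
  fixes w f p g :: "real poly" and m k n D :: nat and c :: real
  assumes m1: "m \<ge> 1" and k2: "k \<ge> 2" and D: "D = (m + 1) * (k - 1) - 1"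
    and dw: "degree w = m" and df: "degree f = D" and dg: "degree g \<le> m"
    and hB: "p \<noteq> 0 \<Longrightarrow> degree p + m < D \<and> (m + degree p) div (m + 1) + 1 < k"
    and hC: "c \<noteq> 0 \<Longrightarrow> 3 * m < D \<and> 3 < k"
  shows "reduced n m k (Pk n w f p g c (-1))"
proof -
  let ?P = "Pk n w f p g c (-1)"
  have X: "(m + 1) * (k - 1) \<ge> 1" using k2 by simp
  have Bnd: "m * n + (m + 1) * (k - 1) - 1 = m * n + D" using X unfolding D by linarith
  have good: "is_mono n \<beta> \<and> mdeg n \<beta> \<le> m * n + D \<and> \<not> divisible_by_k_powers n m k \<beta>"
    if nz: "?P \<beta> \<noteq> 0" for \<beta>
  proof -
    from Pk_support[OF nz] consider
      (A) i where "i < n" "sep n (\<lambda>l. w * qA f i l) \<beta> \<noteq> 0"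
    | (B) i j where "i < n" "j < n" "i \<noteq> j" "sep n (\<lambda>l. w * (qA p i l * qA g j l)) \<beta> \<noteq> 0"
    | (C) i j x where "c \<noteq> 0" "i < n" "j < n" "x < n" "i \<noteq> j" "i \<noteq> x" "j \<noteq> x"
         "sep n (\<lambda>l. w * (qA g i l * qA g j l * qA g x l)) \<beta> \<noteq> 0"
    | (D) "sep n (\<lambda>l. w * 1) \<beta> \<noteq> 0"
      by blast
    then show ?thesis
    proof cases
      case A
      show ?thesis
      proof (rule sep_good[OF A(2), where N = "\<lambda>l. m + (if l = i then D else 0)"])
        fix l show "degree (w * qA f i l) \<le> m + (if l = i then D else 0)"
          using deg_factor_A[of w f i l] dw df by (cases "l = i") auto
      next
        show "(\<Sum>l<n. m + (if l = i then D else 0)) \<le> m * n + D" using A(1) by (simp add: sum.distrib)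
      next
        have "(\<Sum>l<n. (m + (if l = i then D else 0)) div (m + 1)) = (\<Sum>l<n. if l = i then (m + D) div (m + 1) else 0)"
          by (intro sum.cong refl) auto
        also have "\<dots> = k - 1" using A(1) div_helper[OF m1 k2] D by simp
        finally show "(\<Sum>l<n. (m + (if l = i then D else 0)) div (m + 1)) < k" using k2 by simp
      qed
    next
      case B
      have pnz: "p \<noteq> 0"
      proof
        assume p0: "p = 0"
        have "sep n (\<lambda>l. w * (qA p i l * qA g j l)) \<beta> = 0"
          unfolding sep_def using B(1) p0 by (auto simp: qA_def intro!: prod_zero bexI[of _ i])
        then show False using B(4) by simp
      qed
      note hb = hB[OF pnz]
      show ?thesis
      proof (rule sep_good[OF B(4), where N = "\<lambda>l. m + (if l = i then degree p else 0) + (if l = j then m else 0)"])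
        fix l show "degree (w * (qA p i l * qA g j l)) \<le> m + (if l = i then degree p else 0) + (if l = j then m else 0)"
          using deg_factor_B[of w p i l g j] dw dg by (auto split: if_splits)
      next
        show "(\<Sum>l<n. m + (if l = i then degree p else 0) + (if l = j then m else 0)) \<le> m * n + D"
          using B(1,2) hb by (simp add: sum.distrib)
      next
        have "(\<Sum>l<n. (m + (if l = i then degree p else 0) + (if l = j then m else 0)) div (m + 1)) =
            (\<Sum>l<n. (if l = i then (m + degree p) div (m + 1) else 0) + (if l = j then 1 else 0))"
          using B(3) div_2m[OF m1] by (intro sum.cong refl) auto
        also have "\<dots> = (m + degree p) div (m + 1) + 1" using B(1,2) by (simp add: sum.distrib)
        finally show "(\<Sum>l<n. (m + (if l = i then degree p else 0) + (if l = j then m else 0)) div (m + 1)) < k"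
          using hb by simp
      qed
    next
      case C
      note hc = hC[OF C(1)]
      show ?thesis
      proof (rule sep_good[OF C(8), where N = "\<lambda>l. m + (if l = i then m else 0) + (if l = j then m else 0) + (if l = x then m else 0)"])
        fix l show "degree (w * (qA g i l * qA g j l * qA g x l)) \<le> m + (if l = i then m else 0) + (if l = j then m else 0) + (if l = x then m else 0)"
          using deg_factor_C[of w g i l j x] dw dg by (auto split: if_splits)
      next
        show "(\<Sum>l<n. m + (if l = i then m else 0) + (if l = j then m else 0) + (if l = x then m else 0)) \<le> m * n + D"
          using C(2-4) hc by (simp add: sum.distrib)
      next
        have "(\<Sum>l<n. (m + (if l = i then m else 0) + (if l = j then m else 0) + (if l = x then m else 0)) div (m + 1)) =
            (\<Sum>l<n. (if l = i then 1 else 0) + (if l = j then 1 else 0) + (if l = x then 1 else 0))"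
          using C(5-7) div_2m[OF m1] by (intro sum.cong refl) auto
        also have "\<dots> = 3" using C(2-4) by (simp add: sum.distrib)
        finally show "(\<Sum>l<n. (m + (if l = i then m else 0) + (if l = j then m else 0) + (if l = x then m else 0)) div (m + 1)) < k"
          using hc by simp
      qed
    next
      case D
      show ?thesis
      proof (rule sep_good[OF D, where N = "\<lambda>l. m"])
        fix l show "degree (w * 1) \<le> m" using dw by simp
      next
        show "(\<Sum>l<n. m) \<le> m * n + D" by simp
      next
        show "(\<Sum>l<n. m div (m + 1)) < k" using k2 by simp
      qed
    qed
  qed
  have fsP: "fs ?P" unfolding Pk_def
    by (intro fs_add fs_cmult) (simp_all add: PA_def PB_def PC_def PD_def)
  show ?thesis
    unfolding reduced_def is_poly_def Bnd using good fsP by (auto simp: fs_def)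
qed

lemma sep_mdeg:
  assumes "sep n F \<beta> \<noteq> 0" "\<And>l. l < n \<Longrightarrow> degree (F l) \<le> N l"
  shows "mdeg n \<beta> \<le> (\<Sum>l<n. N l)"
  using mdeg_le_sep(1)[OF assms(1)] assms(2) by (meson lessThan_iff order_trans sum_mono)

lemma Pk_phi:
  fixes w f p g :: "real poly" and m k n D :: nat and c :: real
  assumes m1: "m \<ge> 1" and k2: "k \<ge> 2" and D: "D = (m + 1) * (k - 1) - 1"
    and dw: "degree w = m" and lw: "lead_coeff w = 1" and df: "degree f = D" and f0: "f \<noteq> 0"
    and dg: "degree g \<le> m"
    and hB: "p \<noteq> 0 \<Longrightarrow> degree p + m < D"
    and hC: "c \<noteq> 0 \<Longrightarrow> 3 * m < D"
  shows "phi n m k (Pk n w f p g c (-1)) = (\<lambda>\<beta>. lead_coeff f * wpoly n m D (\<lambda>_. 0) \<beta>)"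
proof
  fix \<beta>
  have k1: "k - 1 \<ge> 1" using k2 by simp
  have "(m + 1) * 1 \<le> (m + 1) * (k - 1)" using k1 by (rule mult_le_mono2)
  then have X: "(m + 1) * (k - 1) \<ge> 2" using m1 by simp
  have D0: "D > 0" using X D by simp
  have Bnd: "m * n + (m + 1) * (k - 1) - 1 = m * n + D" using X unfolding D by linarith
  have w0: "w \<noteq> 0" using lw by auto
  show "phi n m k (Pk n w f p g c (-1)) \<beta> = lead_coeff f * wpoly n m D (\<lambda>_. 0) \<beta>"
  proof (cases "mdeg n \<beta> = m * n + D")
    case False
    have "wpoly n m D (\<lambda>_. 0) \<beta> = 0"
      unfolding wpoly_mu using False mdeg_mu[of _ n m D] by (intro sum.neutral ballI) auto
    then show ?thesis unfolding phi_def Bnd using False by simp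
  next
    case True
    have PB: "PB n w p g \<beta> = 0"
      unfolding PB_def
    proof (intro sum.neutral ballI)
      fix i j assume ij: "i \<in> {..<n}" "j \<in> {..<n}"
      show "(if i \<noteq> j then sep n (\<lambda>l. w * (qA p i l * qA g j l)) \<beta> else 0) = 0"
      proof (rule ccontr)
        assume nz: "(if i \<noteq> j then sep n (\<lambda>l. w * (qA p i l * qA g j l)) \<beta> else 0) \<noteq> 0"
        then have ne: "i \<noteq> j" and s: "sep n (\<lambda>l. w * (qA p i l * qA g j l)) \<beta> \<noteq> 0" by (auto split: if_splits)
        have pnz: "p \<noteq> 0"
        proof
          assume p0: "p = 0"
          have "sep n (\<lambda>l. w * (qA p i l * qA g j l)) \<beta> = 0"
            unfolding sep_def using ij p0 by (auto simp: qA_def intro!: prod_zero bexI[of _ i])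
          then show False using s by simp
        qed
        have "mdeg n \<beta> \<le> (\<Sum>l<n. m + (if l = i then degree p else 0) + (if l = j then m else 0))"
        proof (rule sep_mdeg[OF s])
          fix l show "degree (w * (qA p i l * qA g j l)) \<le> m + (if l = i then degree p else 0) + (if l = j then m else 0)"
            using deg_factor_B[of w p i l g j] dw dg by (auto split: if_splits)
        qed
        also have "\<dots> = m * n + degree p + m" using ij by (simp add: sum.distrib)
        finally show False using True hB[OF pnz] by simp
      qed
    qed
    have PC: "c * PC n w g \<beta> = 0"
    proof (cases "c = 0")
      case False
      have "PC n w g \<beta> = 0"
        unfolding PC_def
      proof (intro sum.neutral ballI)
        fix i j x assume ij: "i \<in> {..<n}" "j \<in> {..<n}" "x \<in> {..<n}"
        show "(if i \<noteq> j \<and> i \<noteq> x \<and> j \<noteq> x then sep n (\<lambda>l. w * (qA g i l * qA g j l * qA g x l)) \<beta> else 0) = 0"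
        proof (rule ccontr)
          assume nz: "(if i \<noteq> j \<and> i \<noteq> x \<and> j \<noteq> x then sep n (\<lambda>l. w * (qA g i l * qA g j l * qA g x l)) \<beta> else 0) \<noteq> 0"
          then have s: "sep n (\<lambda>l. w * (qA g i l * qA g j l * qA g x l)) \<beta> \<noteq> 0" by (auto split: if_splits)
          have "mdeg n \<beta> \<le> (\<Sum>l<n. m + (if l = i then m else 0) + (if l = j then m else 0) + (if l = x then m else 0))"
          proof (rule sep_mdeg[OF s])
            fix l show "degree (w * (qA g i l * qA g j l * qA g x l)) \<le> m + (if l = i then m else 0) + (if l = j then m else 0) + (if l = x then m else 0)"
              using deg_factor_C[of w g i l j x] dw dg by (auto split: if_splits)
          qed
          also have "\<dots> = m * n + 3 * m" using ij by (simp add: sum.distrib)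
          finally show False using True hC[OF False] by simp
        qed
      qed
      then show ?thesis by simp
    qed simp
    have PD: "PD n w \<beta> = 0"
    proof (rule ccontr)
      assume "PD n w \<beta> \<noteq> 0"
      then have s: "sep n (\<lambda>l. w * 1) \<beta> \<noteq> 0" by (simp add: PD_def)
      have "mdeg n \<beta> \<le> (\<Sum>l<n. m)" by (rule sep_mdeg[OF s]) (use dw in simp)
      then show False using True D0 by simp
    qed
    have PA: "PA n w f \<beta> = lead_coeff f * wpoly n m D (\<lambda>_. 0) \<beta>"
    proof -
      have trm: "sep n (\<lambda>l. w * qA f i l) \<beta> = (if \<beta> = mu n m D i then lead_coeff f else 0)" if i: "i < n" for i
      proof -
        have dl: "degree (w * qA f i l) = m + (if l = i then D else 0)" for l
          using dw df w0 f0 by (auto simp: qA_def degree_mult_eq)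
        have ll: "lead_coeff (w * qA f i l) = (if l = i then lead_coeff f else 1)" for l
          using lw by (auto simp: qA_def lead_coeff_mult)
        have sumd: "(\<Sum>l<n. degree (w * qA f i l)) = m * n + D" unfolding dl using i by (simp add: sum.distrib)
        have mu: "(\<lambda>l. if l < n then degree (w * qA f i l) else 0) = mu n m D i"
          unfolding dl mu_def by simp
        have pr: "(\<Prod>l<n. lead_coeff (w * qA f i l)) = lead_coeff f" unfolding ll using i by simp
        show ?thesis using top_sep[of n \<beta> "\<lambda>l. w * qA f i l"] True unfolding sumd mu pr by simp
      qed
      have "PA n w f \<beta> = (\<Sum>i<n. if \<beta> = mu n m D i then lead_coeff f else 0)"
        unfolding PA_def by (intro sum.cong refl) (simp add: trm)
      also have "\<dots> = lead_coeff f * wpoly n m D (\<lambda>_. 0) \<beta>"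
        unfolding wpoly_mu sum_distrib_left by (intro sum.cong refl) simp
      finally show ?thesis .
    qed
    show ?thesis unfolding phi_def Bnd using True PA PB PC PD by (simp add: Pk_def)
  qed
qed

lemma W_sum:
  fixes m k n :: nat and L :: real
  defines "D \<equiv> (m + 1) * (k - 1) - 1"
  shows "(\<lambda>\<beta>. \<Sum>(d, l)\<in>W_index n m k. (\<lambda>x. if x = (D, \<lambda>_. 0) then L else 0) (d, l) * wpoly n m d l \<beta>)
      = (\<lambda>\<beta>. L * wpoly n m D (\<lambda>_. 0) \<beta>)"
proof
  fix \<beta>
  have fin: "finite (W_index n m k)"
  proof (rule finite_subset[OF _ finite_cartesian_product[OF finite_atMost finite_box]])
    show "W_index n m k \<subseteq> {..D} \<times> box n (\<lambda>_. D)"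
    proof
      fix x assume "x \<in> W_index n m k"
      then obtain d l where x: "x = (d, l)" "is_mono n l" "d + (m + 1) * (\<Sum>i<n. l i) = D"
        unfolding W_index_def D_def by auto
      have "l i \<le> D" if "i < n" for i
      proof -
        have "l i \<le> (\<Sum>i<n. l i)" using that by (intro member_le_sum) auto
        also have "\<dots> \<le> (m + 1) * (\<Sum>i<n. l i)" by simp
        finally show ?thesis using x(3) by linarith
      qed
      then show "x \<in> {..D} \<times> box n (\<lambda>_. D)" using x by (auto simp: box_def is_mono_def)
    qed
  qed
  have mem: "(D, \<lambda>_. 0) \<in> W_index n m k" unfolding W_index_def D_def by (simp add: is_mono_def)
  have "(\<Sum>(d, l)\<in>W_index n m k. (\<lambda>x. if x = (D, \<lambda>_. 0) then L else 0) (d, l) * wpoly n m d l \<beta>) =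
      (\<Sum>x\<in>W_index n m k. if x = (D, \<lambda>_. 0) then L * wpoly n m D (\<lambda>_. 0) \<beta> else 0)"
  proof (intro sum.cong refl)
    fix x :: "nat \<times> mono"
    obtain d l where x: "x = (d, l)" by fastforce
    show "(case x of (d, l) \<Rightarrow> (if (d, l) = (D, \<lambda>_. 0) then L else 0) * wpoly n m d l \<beta>) =
        (if x = (D, \<lambda>_. 0) then L * wpoly n m D (\<lambda>_. 0) \<beta> else 0)"
      unfolding x by (cases "(d, l) = (D, \<lambda>_. 0)") (simp_all only: prod.case if_True if_False, simp_all)
  qed
  also have "\<dots> = L * wpoly n m D (\<lambda>_. 0) \<beta>" using fin mem by simp
  finally show "(\<Sum>(d, l)\<in>W_index n m k. (\<lambda>x. if x = (D, \<lambda>_. 0) then L else 0) (d, l) * wpoly n m d l \<beta>)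
      = L * wpoly n m D (\<lambda>_. 0) \<beta>" .
qed

lemma main_generic:
  fixes m k n :: nat and f p g :: "real poly" and c :: real
  assumes m1: "m \<ge> 1" and k2: "k \<ge> 2"
    and df: "degree f = (m + 1) * (k - 1) - 1" and lf: "lead_coeff f \<noteq> 0" and dg: "degree g \<le> m"
    and hB: "p \<noteq> 0 \<Longrightarrow> degree p + m < (m + 1) * (k - 1) - 1 \<and> (m + degree p) div (m + 1) + 1 < k"
    and hC: "c \<noteq> 0 \<Longrightarrow> 3 * m < (m + 1) * (k - 1) - 1 \<and> 3 < k"
    and van: "\<And>a \<beta>. gridpt m n a \<Longrightarrow> is_mono n \<beta> \<Longrightarrow> mdeg n \<beta> + card {i. i < n \<and> a i \<noteq> 0} < k \<Longrightarrow>
               card {i. i < n \<and> a i \<noteq> 0} \<ge> 1 \<Longrightarrow> Gk n f p g c (-1) \<beta> a = 0"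
  shows "\<exists>P \<in> U n m k. \<exists>cc :: nat \<times> mono \<Rightarrow> real.
           phi n m k P = (\<lambda>\<beta>. \<Sum>(d, l)\<in>W_index n m k. cc (d, l) * wpoly n m d l \<beta>)
         \<and> cc ((m + 1) * (k - 1) - 1, \<lambda>_. 0) \<noteq> 0"
proof -
  define D where "D = (m + 1) * (k - 1) - 1"
  let ?P = "Pk n (wp m) f p g c (-1)"
  have red: "reduced n m k ?P"
    by (rule Pk_reduced[OF m1 k2 D_def degree_wp df[folded D_def] dg])
       (use hB hC in \<open>auto simp: D_def\<close>)
  have vanish: "\<forall>a::nat \<Rightarrow> nat. (\<forall>i<n. a i \<le> m) \<and> (\<exists>i<n. a i \<noteq> 0) \<longrightarrow>
      zero_mult_ge n ?P k (\<lambda>i. real (a i))"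
  proof (intro allI impI)
    fix a :: "nat \<Rightarrow> nat" assume a: "(\<forall>i<n. a i \<le> m) \<and> (\<exists>i<n. a i \<noteq> 0)"
    have gp: "gridpt m n (\<lambda>i. real (a i))" using a by (auto simp: gridpt_def)
    obtain i0 where i0: "i0 < n" "a i0 \<noteq> 0" using a by blast
    have "{i. i < n \<and> real (a i) \<noteq> 0} \<noteq> {}" using i0 by auto
    moreover have "finite {i. i < n \<and> real (a i) \<noteq> 0}" by simp
    ultimately have c1: "card {i. i < n \<and> real (a i) \<noteq> 0} \<ge> 1"
      by (simp add: Suc_le_eq card_gt_0_iff)
    show "zero_mult_ge n ?P k (\<lambda>i. real (a i))"
    proof (rule vanish_from_G)
      fix i assume i: "i < n" "real (a i) \<noteq> 0"
      then have "a i \<in> {1..m}" using a by auto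
      then show "poly (wp m) (real (a i)) = 0"
        using wp_dvd[of "a i" m] by (auto simp: dvd_iff_poly_eq_0)
    next
      fix \<beta> assume "is_mono n \<beta>" "mdeg n \<beta> + card {i. i < n \<and> real (a i) \<noteq> 0} < k"
      then show "Gk n f p g c (-1) \<beta> (\<lambda>i. real (a i)) = 0"
        using van[OF gp _ _ c1] by blast
    qed
  qed
  have PU: "?P \<in> U n m k" unfolding U_def using red vanish by blast
  have f0: "f \<noteq> 0" using lf by auto
  have ph: "phi n m k ?P = (\<lambda>\<beta>. lead_coeff f * wpoly n m D (\<lambda>_. 0) \<beta>)"
    by (rule Pk_phi[OF m1 k2 D_def degree_wp lead_wp df[folded D_def] f0 dg])
       (use hB hC in \<open>auto simp: D_def\<close>)
  have W: "(\<lambda>\<beta>. \<Sum>(d, l)\<in>W_index n m k. (\<lambda>x. if x = (D, \<lambda>_. 0) then lead_coeff f else 0) (d, l) * wpoly n m d l \<beta>)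
      = (\<lambda>\<beta>. lead_coeff f * wpoly n m D (\<lambda>_. 0) \<beta>)"
    unfolding D_def by (rule W_sum)
  show ?thesis
  proof (intro bexI[OF _ PU] exI[of _ "\<lambda>x. if x = (D, \<lambda>_. 0) then lead_coeff f else 0"] conjI)
    show "phi n m k ?P = (\<lambda>\<beta>. \<Sum>(d, l)\<in>W_index n m k. (\<lambda>x. if x = (D, \<lambda>_. 0) then lead_coeff f else 0) (d, l) * wpoly n m d l \<beta>)"
      unfolding ph W ..
    show "(\<lambda>x. if x = (D, \<lambda>_. 0) then lead_coeff f else 0) ((m + 1) * (k - 1) - 1, \<lambda>_. 0) \<noteq> 0"
      using lf by (simp add: D_def)
  qed
qed

lemma uu_nz: "uu m \<noteq> 0" using degree_uu[of m] wp0[of m] lead_uu[of m] by auto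

lemma degree_ee: "m \<ge> 1 \<Longrightarrow> degree (ee m) = m \<and> lead_coeff (ee m) \<noteq> 0"
proof -
  assume m: "m \<ge> 1"
  define X where "X = - uu m"
  have dX: "degree X = m" unfolding X_def by (simp add: degree_uu)
  have e: "ee m = 1 + X" unfolding ee_def X_def by simp
  have d: "degree (ee m) = m" unfolding e using dX m by (subst degree_add_eq_right) simp_all
  have "lead_coeff (ee m) = lead_coeff X" unfolding e using dX m by (subst lead_coeff_add_le) simp_all
  also have "lead_coeff X = - lead_coeff (uu m)" unfolding X_def by simp
  finally show ?thesis using d wp0[of m] lead_uu[of m] by simp
qed

lemma degree_ph3: "m \<ge> 1 \<Longrightarrow> degree (ph3 m) = 2 * m + 1 \<and> lead_coeff (ph3 m) \<noteq> 0"
proof -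
  assume m: "m \<ge> 1"
  have s: "sg m \<noteq> 0" using sg_nz[OF m] .
  define Q where "Q = [:-1, sg m:]"
  have q: "degree Q = 1" "Q \<noteq> 0" "lead_coeff Q \<noteq> 0" using s by (auto simp: Q_def)
  define X where "X = uu m ^ 2 * Q"
  have u2: "uu m ^ 2 \<noteq> 0" using uu_nz[of m] by simp
  have "degree X = degree (uu m ^ 2) + degree Q" unfolding X_def by (rule degree_mult_eq[OF u2 q(2)])
  also have "degree (uu m ^ 2) = 2 * m" by (simp add: degree_power_eq[OF uu_nz] degree_uu)
  finally have dX: "degree X = 2 * m + 1" using q(1) by simp
  have e: "ph3 m = 1 + X" unfolding ph3_def X_def Q_def ..
  have d: "degree (ph3 m) = 2 * m + 1" unfolding e using dX by (subst degree_add_eq_right) simp_all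
  have "lead_coeff (ph3 m) = lead_coeff X" unfolding e using dX by (subst lead_coeff_add_le) simp_all
  also have "lead_coeff X = lead_coeff (uu m) ^ 2 * lead_coeff Q" unfolding X_def by (simp add: lead_coeff_mult lead_coeff_power)
  finally show ?thesis using d q(3) wp0[of m] lead_uu[of m] by simp
qed

lemma degree_ph4: "m \<ge> 1 \<Longrightarrow> degree (ph4 m) = 3 * m + 2 \<and> lead_coeff (ph4 m) \<noteq> 0"
proof -
  assume m: "m \<ge> 1"
  have t: "ta m / 2 - 2 * (sg m)^2 \<noteq> 0" using ta_ne[OF m] .
  define Q where "Q = [:-1, 2 * sg m, ta m / 2 - 2 * (sg m)^2:]"
  have q: "degree Q = 2" "Q \<noteq> 0" "lead_coeff Q \<noteq> 0" using t by (auto simp: Q_def)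
  define X where "X = uu m ^ 3 * Q"
  have u3: "uu m ^ 3 \<noteq> 0" using uu_nz[of m] by simp
  have "degree X = degree (uu m ^ 3) + degree Q" unfolding X_def by (rule degree_mult_eq[OF u3 q(2)])
  also have "degree (uu m ^ 3) = 3 * m" by (simp add: degree_power_eq[OF uu_nz] degree_uu)
  finally have dX: "degree X = 3 * m + 2" using q(1) by simp
  have e: "ph4 m = 1 + X" unfolding ph4_def X_def Q_def ..
  have d: "degree (ph4 m) = 3 * m + 2" unfolding e using dX by (subst degree_add_eq_right) simp_all
  have "lead_coeff (ph4 m) = lead_coeff X" unfolding e using dX by (subst lead_coeff_add_le) simp_all
  also have "lead_coeff X = lead_coeff (uu m) ^ 3 * lead_coeff Q" unfolding X_def by (simp add: lead_coeff_mult lead_coeff_power)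
  finally show ?thesis using d q(3) wp0[of m] lead_uu[of m] by simp
qed

lemma degree_p3: "m \<ge> 1 \<Longrightarrow> degree (p3 m) \<le> m"
  using degree_ee[of m] unfolding p3_def by (metis degree_smult_le order_trans)

lemma degree_p4: "degree (p4 m) \<le> 2 * m + 1"
proof -
  have a: "degree (uu m ^ 2 * [:1, - sg m:]) \<le> 2 * m + 1"
  proof -
    have "degree (uu m ^ 2 * [:1, - sg m:]) \<le> degree (uu m ^ 2) + degree [:1, - sg m:]" by (rule degree_mult_le)
    also have "degree (uu m ^ 2) \<le> 2 * m" using degree_power_le[of "uu m" 2] by (simp add: degree_uu)
    moreover have "degree [:1, - sg m:] \<le> 1" by simp
    ultimately show ?thesis by linarith
  qed
  have b: "degree ([:-1/2:] - smult (1/2) (uu m)) \<le> 2 * m + 1"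
    using degree_diff_le[of "[:-1/2:]" "2 * m + 1" "smult (1/2) (uu m)"] by (simp add: degree_uu)
  show ?thesis unfolding p4_def by (rule degree_add_le[OF b a])
qed

theorem lemma4p5:
  fixes m k n :: nat
  assumes "m \<ge> 1" and "k \<in> {2, 3, 4}" and "n \<ge> k - 1"
  shows "\<exists>P \<in> U n m k. \<exists>c :: nat \<times> mono \<Rightarrow> real.
           phi n m k P = (\<lambda>\<beta>. \<Sum>(d, l)\<in>W_index n m k. c (d, l) * wpoly n m d l \<beta>)
         \<and> c ((m + 1) * (k - 1) - 1, \<lambda>_. 0) \<noteq> 0"
proof -
  have m1: "m \<ge> 1" by fact
  consider "k = 2" | "k = 3" | "k = 4" using assms(2) by blast
  then show ?thesis
  proof cases
    case 1
    show ?thesis unfolding 1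
    proof (rule main_generic[where f = "ee m" and p = 0 and g = "ee m" and c = 0])
      show "degree (ee m) = (m + 1) * (2 - 1) - 1" using degree_ee[OF m1] by simp
      show "lead_coeff (ee m) \<noteq> 0" by (rule conjunct2[OF degree_ee[OF m1]])
      show "degree (ee m) \<le> m" using degree_ee[OF m1] by simp
      fix a \<beta> assume "gridpt m n a" "is_mono n \<beta>" "mdeg n \<beta> + card {i. i < n \<and> a i \<noteq> 0} < 2"
        "card {i. i < n \<and> a i \<noteq> 0} \<ge> 1"
      then show "Gk n (ee m) 0 (ee m) 0 (-1) \<beta> a = 0" by (rule G2)
    qed (use m1 in auto)
  next
    case 2
    show ?thesis unfolding 2
    proof (rule main_generic[where f = "ph3 m" and p = "p3 m" and g = "ee m" and c = 0])
      show "degree (ph3 m) = (m + 1) * (3 - 1) - 1" using degree_ph3[OF m1] by simp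
      show "lead_coeff (ph3 m) \<noteq> 0" by (rule conjunct2[OF degree_ph3[OF m1]])
      show "degree (ee m) \<le> m" using degree_ee[OF m1] by simp
      show "degree (p3 m) + m < (m + 1) * (3 - 1) - 1 \<and> (m + degree (p3 m)) div (m + 1) + 1 < 3"
      proof
        show "degree (p3 m) + m < (m + 1) * (3 - 1) - 1" using degree_p3[OF m1] by simp
        have "(m + degree (p3 m)) div (m + 1) \<le> (m + m) div (m + 1)"
          using degree_p3[OF m1] by (intro div_le_mono) simp
        then show "(m + degree (p3 m)) div (m + 1) + 1 < 3" using div_2m[OF m1] by simp
      qed
      fix a \<beta> assume "gridpt m n a" "is_mono n \<beta>" "mdeg n \<beta> + card {i. i < n \<and> a i \<noteq> 0} < 3"
        "card {i. i < n \<and> a i \<noteq> 0} \<ge> 1"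
      then show "Gk n (ph3 m) (p3 m) (ee m) 0 (-1) \<beta> a = 0" by (rule G3)
    qed (use m1 in auto)
  next
    case 3
    show ?thesis unfolding 3
    proof (rule main_generic[where f = "ph4 m" and p = "p4 m" and g = "ee m" and c = "1/6"])
      show "degree (ph4 m) = (m + 1) * (4 - 1) - 1" using degree_ph4[OF m1] by simp
      show "lead_coeff (ph4 m) \<noteq> 0" by (rule conjunct2[OF degree_ph4[OF m1]])
      show "degree (ee m) \<le> m" using degree_ee[OF m1] by simp
      show "degree (p4 m) + m < (m + 1) * (4 - 1) - 1 \<and> (m + degree (p4 m)) div (m + 1) + 1 < 4"
      proof
        show "degree (p4 m) + m < (m + 1) * (4 - 1) - 1" using degree_p4[of m] by simp
        have "(m + degree (p4 m)) div (m + 1) \<le> (m - 1 + 2 * (m + 1)) div (m + 1)"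
          using degree_p4[of m] m1 by (intro div_le_mono) simp
        also have "\<dots> = 2 + (m - 1) div (m + 1)" by (rule div_mult_self1) simp
        also have "(m - 1) div (m + 1) = 0" by simp
        finally show "(m + degree (p4 m)) div (m + 1) + 1 < 4" by simp
      qed
      show "3 * m < (m + 1) * (4 - 1) - 1 \<and> 3 < (4::nat)" by simp
      fix a \<beta> assume "gridpt m n a" "is_mono n \<beta>" "mdeg n \<beta> + card {i. i < n \<and> a i \<noteq> 0} < 4"
        "card {i. i < n \<and> a i \<noteq> 0} \<ge> 1"
      then show "Gk n (ph4 m) (p4 m) (ee m) (1/6) (-1) \<beta> a = 0" by (rule G4)
    qed (use m1 in auto)
  qed
qed

end
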